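(* Let $t^k_{\alpha\beta}=\operatorname{tr}(W_\alpha V_\beta Z^k)=V_\beta Z^kW_\alpha$ for $k\in\mathbb N$, $\alpha,\beta\in\{1,\dots,d\}$, regarded as regular functions on $\mathcal C^\times_{n,d,q}$. Then (1) $\{\operatorname{tr}Z^i,t^k_{\beta\alpha}\}=0$ for all $i\ge1$, $k\ge0$ and all $\alpha,\beta$; (2) for all $\alpha,\beta,\gamma,\epsilon$ and $k,l\ge1$, $$\begin{aligned}\{t^k_{\gamma\epsilon},t^l_{\alpha\beta}\}=&\tfrac12[o(\gamma,\beta)+o(\epsilon,\alpha)-o(\epsilon,\beta)-o(\gamma,\alpha)]t^k_{\gamma\epsilon}t^l_{\alpha\beta}+\tfrac12o(\gamma,\beta)t^{k+l}_{\alpha\epsilon}t^0_{\gamma\beta}+\tfrac12o(\epsilon,\alpha)t^0_{\alpha\epsilon}t^{k+l}_{\gamma\beta}\\&-\tfrac12o(\epsilon,\beta)t^l_{\alpha\epsilon}t^k_{\gamma\beta}-\tfrac12o(\gamma,\alpha)t^k_{\alpha\epsilon}t^l_{\gamma\beta}-\delta_{\gamma\beta}\big[t^{k+l}_{\alpha\epsilon}+\tfrac12t^{k+l}_{\alpha\epsilon}t^0_{\gamma\beta}+\tfrac12t^k_{\gamma\epsilon}t^l_{\alpha\beta}\big]\\&+\delta_{\alpha\epsilon}\big[t^{k+l}_{\gamma\beta}+\tfrac12t^0_{\alpha\epsilon}t^{k+l}_{\gamma\beta}+\tfrac12t^k_{\gamma\epsilon}t^l_{\alpha\beta}\big]\\&+\tfrac12\Big[\sum_{\tau=1}^kt^{k-\tau}_{\gamma\beta}t^{l+\tau}_{\alpha\epsilon}-\sum_{\tau=1}^{k-1}t^{k+l-\tau}_{\gamma\beta}t^\tau_{\alpha\epsilon}\Big]-\tfrac12\Big[\sum_{\sigma=1}^lt^{k+\sigma}_{\gamma\beta}t^{l-\sigma}_{\alpha\epsilon}-\sum_{\sigma=1}^{l-1}t^\sigma_{\gamma\beta}t^{k+l-\sigma}_{\alpha\epsilon}\Big],\end{aligned}$$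 and this formula remains valid when $k=0$ or $l=0$ (or both) provided the final four sums are omitted.
   Context: Fix integers $n\ge1$, $d\ge1$ and $q\in\mathbb C^\times$ not a root of unity. Greek indices range over $\{1,\dots,d\}$; set $o(\alpha,\beta)=0$ if $\alpha=\beta$, $o(\alpha,\beta)=1$ if $\alpha<\beta$, $o(\alpha,\beta)=-1$ if $\alpha>\beta$. Let $\mathcal M^\times_{n,d,q}$ be the affine variety of tuples $(X,Z,V_1,\dots,V_d,W_1,\dots,W_d)$ with $X,Z\in\mathrm{GL}_n(\mathbb C)$, $V_\alpha\in\mathrm{Mat}_{1\times n}(\mathbb C)$, $W_\alpha\in\mathrm{Mat}_{n\times 1}(\mathbb C)$, such that every $\mathrm{Id}_n+W_\alpha V_\alpha$ is invertible and $XZX^{-1}Z^{-1}(\mathrm{Id}_n+W_1V_1)^{-1}\cdots(\mathrm{Id}_n+W_dV_d)^{-1}=q\,\mathrm{Id}_n$. $\mathrm{GL}_n$ acts by $g\cdot(X,Z,V_\alpha,W_\alpha)=(gXg^{-1},gZg^{-1},V_\alpha g^{-1},gW_\alpha)$; the action is free and $\mathcal C^\times_{n,d,q}=\mathcal M^\times_{n,d,q}/\!/\mathrm{GL}_n$ is a smooth affine variety of dimension $2nd$ with $\mathbb C[\mathcal C^\times_{n,d,q}]=\mathbb C[\mathcal M^\times_{n,d,q}]^{\mathrm{GL}_n}$. Write $V_{\alpha,j}$, $W_{\alpha,k}$ for the entries. Let $\{-,-\}$ be the antisymmetric biderivation on functions of $(X,Z,V_\alpha,W_\alpha)$ (Van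 den Bergh's quasi-Poisson bracket) given by $\{X_{ij},X_{kl}\}=\tfrac12(\delta_{il}(X^2)_{kj}-\delta_{kj}(X^2)_{il})$, $\{Z_{ij},Z_{kl}\}=\tfrac12(\delta_{kj}(Z^2)_{il}-\delta_{il}(Z^2)_{kj})$, $\{X_{ij},Z_{kl}\}=\tfrac12((ZX)_{kj}\delta_{il}+\delta_{kj}(XZ)_{il}+Z_{kj}X_{il}-X_{kj}Z_{il})$, $\{U_{ij},W_{\alpha,k}\}=\tfrac12(\delta_{kj}(UW_\alpha)_i-U_{kj}W_{\alpha,i})$, $\{U_{ij},V_{\alpha,l}\}=\tfrac12((V_\alpha U)_j\delta_{il}-V_{\alpha,j}U_{il})$ for $U\in\{X,Z\}$, $\{V_{\alpha,j},V_{\beta,l}\}=\tfrac12 o(\beta,\alpha)(V_{\beta,j}V_{\alpha,l}+V_{\alpha,j}V_{\beta,l})$, $\{W_{\alpha,i},W_{\beta,k}\}=\tfrac12 o(\beta,\alpha)(W_{\beta,k}W_{\alpha,i}+W_{\alpha,k}W_{\beta,i})$, $\{V_{\alpha,j},W_{\beta,k}\}=\delta_{\alpha\beta}(\delta_{kj}+\tfrac12W_{\alpha,k}V_{\alpha,j}+\tfrac12\delta_{kj}V_\alpha W_\alpha)+\tfrac12 o(\alpha,\beta)(\delta_{kj}V_\alpha W_\beta+W_{\beta,k}V_{\alpha,j})$. Restricted to $\mathrm{GL}_n$-invariant functions this bracket induces a non-degenerate Poisson bracket on $\mathcal C^\times_{n,d,q}$ (quasi-Hamiltonian reduction); this is the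 Poisson bracket $\{-,-\}$ on $\mathcal C^\times_{n,d,q}$. *)

theory Defs
  imports "HOL-Analysis.Derivative" "Jordan_Normal_Form.Matrix"
begin

text \<open>Coordinates on the ambient space of tuples (X, Z, V_1..V_d, W_1..W_d).
  Xc i j = X_ij, Zc i j = Z_ij (matrix indices 0..<n), Vc a j = V_{a,j},
  Wc a k = W_{a,k} (a in 1..d, entry index 0..<n).\<close>
datatype coord = Xc nat nat | Zc nat nat | Vc nat nat | Wc nat nat

type_synonym point = "coord \<Rightarrow> complex"

definition coords :: "nat \<Rightarrow> nat \<Rightarrow> coord set" where
  "coords n d =
     (\<lambda>(i,j). Xc i j) ` ({..<n} \<times> {..<n}) \<union>
     (\<lambda>(i,j). Zc i j) ` ({..<n} \<times> {..<n}) \<union>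
     (\<lambda>(a,j). Vc a j) ` ({1..d} \<times> {..<n}) \<union>
     (\<lambda>(a,j). Wc a j) ` ({1..d} \<times> {..<n})"

definition ord_sign :: "nat \<Rightarrow> nat \<Rightarrow> complex" where
  "ord_sign a b = (if a = b then 0 else if a < b then 1 else -1)"

definition kd :: "nat \<Rightarrow> nat \<Rightarrow> complex" where
  "kd i j = (if i = j then 1 else 0)"

definition xf :: "point \<Rightarrow> nat \<Rightarrow> nat \<Rightarrow> complex" where "xf p i j = p (Xc i j)"
definition zf :: "point \<Rightarrow> nat \<Rightarrow> nat \<Rightarrow> complex" where "zf p i j = p (Zc i j)"
definition vf :: "point \<Rightarrow> nat \<Rightarrow> nat \<Rightarrow> complex" where "vf p a j = p (Vc a j)"
definition wf :: "point \<Rightarrow> nat \<Rightarrow> nat \<Rightarrow> complex" where "wf p a k = p (Wc a k)"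

definition mm :: "nat \<Rightarrow> (nat \<Rightarrow> nat \<Rightarrow> complex) \<Rightarrow> (nat \<Rightarrow> nat \<Rightarrow> complex) \<Rightarrow> nat \<Rightarrow> nat \<Rightarrow> complex" where
  "mm n A B i j = (\<Sum>m<n. A i m * B m j)"

definition UWv :: "nat \<Rightarrow> (nat \<Rightarrow> nat \<Rightarrow> complex) \<Rightarrow> point \<Rightarrow> nat \<Rightarrow> nat \<Rightarrow> complex" where
  "UWv n U p a i = (\<Sum>m<n. U i m * wf p a m)"
definition VUv :: "nat \<Rightarrow> (nat \<Rightarrow> nat \<Rightarrow> complex) \<Rightarrow> point \<Rightarrow> nat \<Rightarrow> nat \<Rightarrow> complex" where
  "VUv n U p a j = (\<Sum>m<n. vf p a m * U m j)"
definition VW :: "nat \<Rightarrow> point \<Rightarrow> nat \<Rightarrow> nat \<Rightarrow> complex" where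
  "VW n p a b = (\<Sum>m<n. vf p a m * wf p b m)"

definition brUW :: "nat \<Rightarrow> (nat \<Rightarrow> nat \<Rightarrow> complex) \<Rightarrow> point \<Rightarrow> nat \<Rightarrow> nat \<Rightarrow> nat \<Rightarrow> nat \<Rightarrow> complex" where
  "brUW n U p i j a k = (1/2) * (kd k j * UWv n U p a i - U k j * wf p a i)"
definition brUV :: "nat \<Rightarrow> (nat \<Rightarrow> nat \<Rightarrow> complex) \<Rightarrow> point \<Rightarrow> nat \<Rightarrow> nat \<Rightarrow> nat \<Rightarrow> nat \<Rightarrow> complex" where
  "brUV n U p i j a l = (1/2) * (VUv n U p a j * kd i l - vf p a j * U i l)"

definition brXZ :: "nat \<Rightarrow> point \<Rightarrow> nat \<Rightarrow> nat \<Rightarrow> nat \<Rightarrow> nat \<Rightarrow> complex" where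
  "brXZ n p i j k l = (1/2) * (mm n (zf p) (xf p) k j * kd i l + kd k j * mm n (xf p) (zf p) i l
      + zf p k j * xf p i l - xf p k j * zf p i l)"

definition brVW :: "nat \<Rightarrow> point \<Rightarrow> nat \<Rightarrow> nat \<Rightarrow> nat \<Rightarrow> nat \<Rightarrow> complex" where
  "brVW n p a j b k = kd a b * (kd k j + (1/2) * wf p a k * vf p a j + (1/2) * kd k j * VW n p a a)
      + (1/2) * ord_sign a b * (kd k j * VW n p a b + wf p b k * vf p a j)"

text \<open>Van den Bergh's quasi-Poisson bracket on pairs of coordinate functions,
  evaluated at the point p (antisymmetric by construction).\<close>
fun qpb :: "nat \<Rightarrow> point \<Rightarrow> coord \<Rightarrow> coord \<Rightarrow> complex" where
  "qpb n p (Xc i j) (Xc k l) = (1/2) * (kd i l * mm n (xf p) (xf p) k j - kd k j * mm n (xf p) (xf p) i l)"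
| "qpb n p (Zc i j) (Zc k l) = (1/2) * (kd k j * mm n (zf p) (zf p) i l - kd i l * mm n (zf p) (zf p) k j)"
| "qpb n p (Xc i j) (Zc k l) = brXZ n p i j k l"
| "qpb n p (Zc k l) (Xc i j) = - brXZ n p i j k l"
| "qpb n p (Xc i j) (Wc a k) = brUW n (xf p) p i j a k"
| "qpb n p (Wc a k) (Xc i j) = - brUW n (xf p) p i j a k"
| "qpb n p (Zc i j) (Wc a k) = brUW n (zf p) p i j a k"
| "qpb n p (Wc a k) (Zc i j) = - brUW n (zf p) p i j a k"
| "qpb n p (Xc i j) (Vc a l) = brUV n (xf p) p i j a l"
| "qpb n p (Vc a l) (Xc i j) = - brUV n (xf p) p i j a l"
| "qpb n p (Zc i j) (Vc a l) = brUV n (zf p) p i j a l"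
| "qpb n p (Vc a l) (Zc i j) = - brUV n (zf p) p i j a l"
| "qpb n p (Vc a j) (Vc b l) = (1/2) * ord_sign b a * (vf p b j * vf p a l + vf p a j * vf p b l)"
| "qpb n p (Wc a i) (Wc b k) = (1/2) * ord_sign b a * (wf p b k * wf p a i + wf p a k * wf p b i)"
| "qpb n p (Vc a j) (Wc b k) = brVW n p a j b k"
| "qpb n p (Wc b k) (Vc a j) = - brVW n p a j b k"

definition pd :: "(point \<Rightarrow> complex) \<Rightarrow> point \<Rightarrow> coord \<Rightarrow> complex" where
  "pd f p c = deriv (\<lambda>t. f (p(c := p c + t))) 0"

definition pbr :: "nat \<Rightarrow> nat \<Rightarrow> (point \<Rightarrow> complex) \<Rightarrow> (point \<Rightarrow> complex) \<Rightarrow> point \<Rightarrow> complex" where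
  "pbr n d f g p = (\<Sum>a\<in>coords n d. \<Sum>b\<in>coords n d. pd f p a * pd g p b * qpb n p a b)"

definition Xm :: "nat \<Rightarrow> point \<Rightarrow> complex mat" where "Xm n p = mat n n (\<lambda>(i,j). p (Xc i j))"
definition Zm :: "nat \<Rightarrow> point \<Rightarrow> complex mat" where "Zm n p = mat n n (\<lambda>(i,j). p (Zc i j))"
definition Vm :: "nat \<Rightarrow> point \<Rightarrow> nat \<Rightarrow> complex mat" where "Vm n p a = mat 1 n (\<lambda>(_,j). p (Vc a j))"
definition Wm :: "nat \<Rightarrow> point \<Rightarrow> nat \<Rightarrow> complex mat" where "Wm n p a = mat n 1 (\<lambda>(i,_). p (Wc a i))"

definition Am :: "nat \<Rightarrow> point \<Rightarrow> nat \<Rightarrow> complex mat" where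
  "Am n p a = 1\<^sub>m n + Wm n p a * Vm n p a"

definition minv :: "complex mat \<Rightarrow> complex mat" where
  "minv A = (SOME B. inverts_mat A B \<and> inverts_mat B A)"

definition mtrace :: "complex mat \<Rightarrow> complex" where
  "mtrace A = (\<Sum>i<dim_row A. A $$ (i,i))"

definition Mx :: "nat \<Rightarrow> nat \<Rightarrow> complex \<Rightarrow> point set" where
  "Mx n d q = {p. invertible_mat (Xm n p) \<and> invertible_mat (Zm n p) \<and>
      (\<forall>a\<in>{1..d}. invertible_mat (Am n p a)) \<and>
      Xm n p * Zm n p * minv (Xm n p) * minv (Zm n p) *
        foldl (\<lambda>M a. M * minv (Am n p a)) (1\<^sub>m n) [1..<d+1] = q \<cdot>\<^sub>m 1\<^sub>m n}"

definition trZ :: "nat \<Rightarrow> nat \<Rightarrow> point \<Rightarrow> complex" where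
  "trZ n i p = mtrace (Zm n p ^\<^sub>m i)"

definition tf :: "nat \<Rightarrow> nat \<Rightarrow> nat \<Rightarrow> nat \<Rightarrow> point \<Rightarrow> complex" where
  "tf n k a b p = (\<Sum>j<n. \<Sum>l<n. p (Vc b j) * (Zm n p ^\<^sub>m k) $$ (j,l) * p (Wc a l))"

end

theory Submission
  imports Defs
begin


definition zz :: "nat \<Rightarrow> point \<Rightarrow> nat \<Rightarrow> nat \<Rightarrow> complex" where
  "zz n p i j = (if i < n \<and> j < n then p (Zc i j) else 0)"

fun zp :: "nat \<Rightarrow> point \<Rightarrow> nat \<Rightarrow> nat \<Rightarrow> nat \<Rightarrow> complex" where
  "zp n p 0 i j = (if i < n \<and> i = j then 1 else 0)"
| "zp n p (Suc k) i j = (\<Sum>m<n. zp n p k i m * zz n p m j)"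

definition vz :: "nat \<Rightarrow> point \<Rightarrow> nat \<Rightarrow> nat \<Rightarrow> nat \<Rightarrow> complex" where
  "vz n p b r j = (\<Sum>i<n. p (Vc b i) * zp n p r i j)"
definition zw :: "nat \<Rightarrow> point \<Rightarrow> nat \<Rightarrow> nat \<Rightarrow> nat \<Rightarrow> complex" where
  "zw n p a s j = (\<Sum>l<n. zp n p s j l * p (Wc a l))"
definition tt :: "nat \<Rightarrow> point \<Rightarrow> nat \<Rightarrow> nat \<Rightarrow> nat \<Rightarrow> complex" where
  "tt n p s a b = (\<Sum>i<n. \<Sum>l<n. p (Vc b i) * zp n p s i l * p (Wc a l))"

lemma zp_out: "\<not> (i < n \<and> j < n) \<Longrightarrow> zp n p k i j = 0"
  by (induction k arbitrary: j) (auto simp: zz_def)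

lemma sum_kd_right: fixes f :: "nat \<Rightarrow> complex" shows "(\<Sum>m<n. f m * (if m < n \<and> m = j then 1 else 0)) = (if j < n then f j else 0)"
proof -
  have "(\<Sum>m<n. f m * (if m < n \<and> m = j then 1 else 0)) = (\<Sum>m<n. if m = j then f m else 0)"
    by (rule sum.cong) auto
  then show ?thesis by simp
qed

lemma sum_kd_left: fixes f :: "nat \<Rightarrow> complex" shows "(\<Sum>m<n. (if i < n \<and> i = m then 1 else 0) * f m) = (if i < n then f i else 0)"
proof -
  have "(\<Sum>m<n. (if i < n \<and> i = m then 1 else 0) * f m) = (\<Sum>m<n. if i = m then f m else 0)"
    by (rule sum.cong) auto
  then show ?thesis by simp
qed

lemma zp_add: "zp n p (a + b) i j = (\<Sum>m<n. zp n p a i m * zp n p b m j)"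
proof (induction b arbitrary: j)
  case 0
  have "(\<Sum>m<n. zp n p a i m * zp n p 0 m j) = (if j < n then zp n p a i j else 0)"
    using sum_kd_right[where f="\<lambda>m. zp n p a i m" and n=n and j=j] by simp
  also have "\<dots> = zp n p a i j" using zp_out[of i n j] by auto
  finally show ?case by simp
next
  case (Suc b)
  have "zp n p (a + Suc b) i j = (\<Sum>m<n. zp n p (a+b) i m * zz n p m j)" by simp
  also have "\<dots> = (\<Sum>m<n. \<Sum>x<n. zp n p a i x * zp n p b x m * zz n p m j)"
    by (simp add: Suc sum_distrib_right)
  also have "\<dots> = (\<Sum>x<n. \<Sum>m<n. zp n p a i x * zp n p b x m * zz n p m j)"
    by (rule sum.swap)
  also have "\<dots> = (\<Sum>x<n. zp n p a i x * zp n p (Suc b) x j)"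
    by (simp add: sum_distrib_left mult.assoc)
  finally show ?case .
qed

lemma zp_one: "zp n p 1 i j = zz n p i j"
proof -
  have "zp n p 1 i j = (\<Sum>m<n. (if i < n \<and> i = m then 1 else 0) * zz n p m j)" by simp
  also have "\<dots> = zz n p i j" by (subst sum_kd_left) (auto simp: zz_def)
  finally show ?thesis .
qed

lemma Zm_pow: "i < n \<Longrightarrow> j < n \<Longrightarrow> (Zm n p ^\<^sub>m k) $$ (i,j) = zp n p k i j"
proof (induction k arbitrary: j)
  case 0
  then show ?case by (simp add: Zm_def)
next
  case (Suc k)
  have d: "Zm n p \<in> carrier_mat n n" by (simp add: Zm_def)
  have "(Zm n p ^\<^sub>m Suc k) $$ (i,j) = row (Zm n p ^\<^sub>m k) i \<bullet> col (Zm n p) j"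
    using Suc.prems d by simp
  also have "\<dots> = (\<Sum>m<n. (Zm n p ^\<^sub>m k) $$ (i,m) * Zm n p $$ (m,j))"
    using Suc.prems d by (simp add: scalar_prod_def lessThan_atLeast0)
  also have "\<dots> = zp n p (Suc k) i j"
    using Suc by (auto simp: Zm_def zz_def intro!: sum.cong)
  finally show ?case .
qed

lemma tf_tt: "tf n k a b p = tt n p k a b"
  unfolding tf_def tt_def by (auto simp: Zm_pow intro!: sum.cong)

lemma trZ_zp: "trZ n i p = (\<Sum>j<n. zp n p i j j)"
proof -
  have "dim_row (Zm n p ^\<^sub>m i) = n" by (simp add: Zm_def)
  then show ?thesis unfolding trZ_def mtrace_def by (auto simp: Zm_pow intro!: sum.cong)
qed

lemma vz_add: "vz n p b (r + s) j = (\<Sum>m<n. vz n p b r m * zp n p s m j)"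
proof -
  have "vz n p b (r + s) j = (\<Sum>i<n. \<Sum>m<n. p (Vc b i) * (zp n p r i m * zp n p s m j))"
    by (simp add: vz_def zp_add sum_distrib_left)
  also have "\<dots> = (\<Sum>m<n. \<Sum>i<n. p (Vc b i) * zp n p r i m * zp n p s m j)"
    by (subst sum.swap) (simp add: mult.assoc)
  also have "\<dots> = (\<Sum>m<n. vz n p b r m * zp n p s m j)"
    by (simp add: vz_def sum_distrib_right)
  finally show ?thesis .
qed

lemma zw_add: "zw n p a (r + s) j = (\<Sum>m<n. zp n p r j m * zw n p a s m)"
proof -
  have "zw n p a (r + s) j = (\<Sum>l<n. \<Sum>m<n. zp n p r j m * zp n p s m l * p (Wc a l))"
    by (simp add: zw_def zp_add sum_distrib_right)
  also have "\<dots> = (\<Sum>m<n. \<Sum>l<n. zp n p r j m * (zp n p s m l * p (Wc a l)))"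
    by (subst sum.swap) (simp add: mult.assoc)
  also have "\<dots> = (\<Sum>m<n. zp n p r j m * zw n p a s m)"
    by (simp add: zw_def sum_distrib_left)
  finally show ?thesis .
qed

lemma tt_V: "tt n p s a b = (\<Sum>i<n. p (Vc b i) * zw n p a s i)"
  by (simp add: tt_def zw_def sum_distrib_left mult.assoc)

lemma tt_W: "tt n p s a b = (\<Sum>l<n. vz n p b s l * p (Wc a l))"
  unfolding tt_def vz_def sum_distrib_right by (rule sum.swap)

lemma contr: "(\<Sum>j<n. vz n p b r j * zw n p a s j) = tt n p (r + s) a b"
proof -
  have "(\<Sum>j<n. vz n p b r j * zw n p a s j) = (\<Sum>j<n. \<Sum>l<n. vz n p b r j * zp n p s j l * p (Wc a l))"
    by (simp add: zw_def sum_distrib_left mult.assoc)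
  also have "\<dots> = (\<Sum>l<n. \<Sum>j<n. vz n p b r j * zp n p s j l * p (Wc a l))"
    by (rule sum.swap)
  also have "\<dots> = (\<Sum>l<n. vz n p b (r+s) l * p (Wc a l))"
    by (simp add: vz_add sum_distrib_right)
  also have "\<dots> = tt n p (r + s) a b" by (simp add: tt_W)
  finally show ?thesis .
qed

lemma vz0: "j < n \<Longrightarrow> vz n p b 0 j = p (Vc b j)"
proof -
  assume j: "j < n"
  have "vz n p b 0 j = (\<Sum>i<n. if i = j then p (Vc b i) else 0)"
    unfolding vz_def by (rule sum.cong) auto
  then show ?thesis using j by simp
qed

lemma zw0: "j < n \<Longrightarrow> zw n p a 0 j = p (Wc a j)"
proof -
  assume j: "j < n"
  have "zw n p a 0 j = (\<Sum>i<n. if i = j then p (Wc a i) else 0)"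
    unfolding zw_def by (rule sum.cong) auto
  then show ?thesis using j by simp
qed

lemma vz_out: "\<not> j < n \<Longrightarrow> vz n p b r j = 0"
  by (simp add: vz_def zp_out)
lemma zw_out: "\<not> j < n \<Longrightarrow> zw n p a r j = 0"
  by (simp add: zw_def zp_out)

lemma vzZ: "(\<Sum>m<n. vz n p b r m * zz n p m j) = vz n p b (Suc r) j"
  using vz_add[of n p b r 1 j] unfolding zp_one by simp

lemma Zzw: "(\<Sum>m<n. zz n p j m * zw n p a s m) = zw n p a (Suc s) j"
  using zw_add[of n p a 1 s j] unfolding zp_one by simp

lemma dcoord: "((\<lambda>t. (p(c := p c + t)) c') has_field_derivative (if c' = c then 1 else 0)) (at 0)"
proof (cases "c' = c")
  case True
  have "((\<lambda>t. p c + t) has_field_derivative 0 + 1) (at 0)"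
    by (rule DERIV_add) auto
  then show ?thesis using True by simp
next
  case False
  then show ?thesis by simp
qed

lemma dzz: "((\<lambda>t. zz n (p(c := p c + t)) i j) has_field_derivative
   (if i < n \<and> j < n \<and> c = Zc i j then 1 else 0)) (at 0)"
proof (cases "i < n \<and> j < n")
  case True
  then show ?thesis using dcoord[of p c "Zc i j"] by (auto simp: zz_def)
next
  case False
  have "(\<lambda>t. zz n (p(c := p c + t)) i j) = (\<lambda>t. 0)" using False by (auto simp: zz_def)
  moreover have "(if i < n \<and> j < n \<and> c = Zc i j then 1 else 0) = (0::complex)" using False by auto
  ultimately show ?thesis by simp
qed

fun dz :: "nat \<Rightarrow> point \<Rightarrow> coord \<Rightarrow> nat \<Rightarrow> nat \<Rightarrow> nat \<Rightarrow> complex" where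
  "dz n p c 0 i j = 0"
| "dz n p c (Suc k) i j = (\<Sum>m<n. dz n p c k i m * zz n p m j
      + zp n p k i m * (if m < n \<and> j < n \<and> c = Zc m j then 1 else 0))"

lemma dzp: "((\<lambda>t. zp n (p(c := p c + t)) k i j) has_field_derivative dz n p c k i j) (at 0)"
proof (induction k arbitrary: j)
  case 0
  then show ?case by simp
next
  case (Suc k)
  show ?case unfolding zp.simps dz.simps
  proof (rule DERIV_sum)
    fix m assume "m \<in> {..<n}"
    have "((\<lambda>t. zp n (p(c := p c + t)) k i m * zz n (p(c := p c + t)) m j) has_field_derivative
       dz n p c k i m * zz n (p(c := p c + 0)) m j + (if m < n \<and> j < n \<and> c = Zc m j then 1 else 0) * zp n (p(c := p c + 0)) k i m) (at 0)"
      by (rule DERIV_mult[OF Suc dzz])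
    then show "((\<lambda>t. zp n (p(c := p c + t)) k i m * zz n (p(c := p c + t)) m j) has_field_derivative
       dz n p c k i m * zz n p m j + zp n p k i m * (if m < n \<and> j < n \<and> c = Zc m j then 1 else 0)) (at 0)"
      by (simp add: mult.commute)
  qed
qed

definition dtt :: "nat \<Rightarrow> point \<Rightarrow> coord \<Rightarrow> nat \<Rightarrow> nat \<Rightarrow> nat \<Rightarrow> complex" where
  "dtt n p c k a b = (\<Sum>i<n. \<Sum>l<n.
      (if c = Vc b i then 1 else 0) * zp n p k i l * p (Wc a l)
    + p (Vc b i) * dz n p c k i l * p (Wc a l)
    + p (Vc b i) * zp n p k i l * (if c = Wc a l then 1 else 0))"

lemma dtt: "((\<lambda>t. tt n (p(c := p c + t)) k a b) has_field_derivative dtt n p c k a b) (at 0)"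
  unfolding tt_def dtt_def
proof (intro DERIV_sum)
  fix i l
  have "((\<lambda>t. (p(c := p c + t)) (Vc b i) * zp n (p(c := p c + t)) k i l * (p(c := p c + t)) (Wc a l))
     has_field_derivative
     ((if Vc b i = c then 1 else 0) * zp n (p(c := p c + 0)) k i l + dz n p c k i l * (p(c := p c + 0)) (Vc b i))
       * (p(c := p c + 0)) (Wc a l)
     + (if Wc a l = c then 1 else 0) * ((p(c := p c + 0)) (Vc b i) * zp n (p(c := p c + 0)) k i l)) (at 0)"
    by (intro DERIV_mult dcoord dzp)
  then show "((\<lambda>t. (p(c := p c + t)) (Vc b i) * zp n (p(c := p c + t)) k i l * (p(c := p c + t)) (Wc a l))
     has_field_derivative
      (if c = Vc b i then 1 else 0) * zp n p k i l * p (Wc a l)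
    + p (Vc b i) * dz n p c k i l * p (Wc a l)
    + p (Vc b i) * zp n p k i l * (if c = Wc a l then 1 else 0)) (at 0)"
    by (rule DERIV_cong) (auto simp: algebra_simps)
qed

lemma pd_tf: "pd (tf n k a b) p c = dtt n p c k a b"
proof -
  have e: "tf n k a b = (\<lambda>p. tt n p k a b)" by (rule ext) (simp add: tf_tt)
  show ?thesis unfolding pd_def e by (rule DERIV_imp_deriv[OF dtt])
qed

lemma dz_nonZ: "(\<And>i j. c \<noteq> Zc i j) \<Longrightarrow> dz n p c k i j = 0"
  by (induction k arbitrary: j) auto

lemma dz_Z: "dz n p (Zc i0 j0) k i j = (\<Sum>x<k. zp n p x i i0 * zp n p (k - 1 - x) j0 j)"
proof (induction k arbitrary: j)
  case 0
  then show ?case by simp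
next
  case (Suc k)
  have "dz n p (Zc i0 j0) (Suc k) i j = (\<Sum>m<n. dz n p (Zc i0 j0) k i m * zz n p m j)
      + (\<Sum>m<n. zp n p k i m * (if m < n \<and> j < n \<and> Zc i0 j0 = Zc m j then 1 else 0))"
    by (simp add: sum.distrib)
  also have "(\<Sum>m<n. zp n p k i m * (if m < n \<and> j < n \<and> Zc i0 j0 = Zc m j then 1 else 0))
      = zp n p k i i0 * zp n p 0 j0 j"
  proof (cases "i0 < n \<and> j0 < n \<and> j = j0")
    case True
    have "(\<Sum>m<n. zp n p k i m * (if m < n \<and> j < n \<and> Zc i0 j0 = Zc m j then 1 else 0))
       = (\<Sum>m<n. if m = i0 then zp n p k i m else 0)" by (rule sum.cong) (use True in auto)
    then show ?thesis using True by simp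
  next
    case False
    then show ?thesis using zp_out[of i n i0 p k] by (auto intro!: sum.neutral)
  qed
  also have "(\<Sum>m<n. dz n p (Zc i0 j0) k i m * zz n p m j)
      = (\<Sum>x<k. zp n p x i i0 * zp n p (Suc k - 1 - x) j0 j)"
  proof -
    have "(\<Sum>m<n. dz n p (Zc i0 j0) k i m * zz n p m j)
        = (\<Sum>m<n. \<Sum>x<k. zp n p x i i0 * (zp n p (k - 1 - x) j0 m * zz n p m j))"
      by (simp add: Suc sum_distrib_right mult.assoc)
    also have "\<dots> = (\<Sum>x<k. zp n p x i i0 * zp n p (Suc (k - 1 - x)) j0 j)"
      by (subst sum.swap) (simp add: sum_distrib_left)
    also have "\<dots> = (\<Sum>x<k. zp n p x i i0 * zp n p (Suc k - 1 - x) j0 j)"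
      by (rule sum.cong) (auto simp: Suc_diff_Suc)
    finally show ?thesis .
  qed
  finally show ?case by simp
qed

lemma gX: "pd (tf n k a b) p (Xc i j) = 0"
  unfolding pd_tf dtt_def by (simp add: dz_nonZ)

lemma gV: "pd (tf n k a b) p (Vc x j) = kd x b * zw n p a k j"
proof -
  have "pd (tf n k a b) p (Vc x j) = (\<Sum>i<n. \<Sum>l<n. (if x = b \<and> j = i then 1 else 0) * zp n p k i l * p (Wc a l))"
    unfolding pd_tf dtt_def by (simp add: dz_nonZ)
  also have "\<dots> = (\<Sum>i<n. if i = j then (if x = b then zw n p a k i else 0) else 0)"
    by (rule sum.cong) (auto simp: zw_def)
  also have "\<dots> = kd x b * zw n p a k j"
    by (auto simp: kd_def zw_out)
  finally show ?thesis .
qed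

lemma gW: "pd (tf n k a b) p (Wc x j) = kd x a * vz n p b k j"
proof -
  have "pd (tf n k a b) p (Wc x j) = (\<Sum>i<n. \<Sum>l<n. p (Vc b i) * zp n p k i l * (if x = a \<and> j = l then 1 else 0))"
    unfolding pd_tf dtt_def by (simp add: dz_nonZ)
  also have "\<dots> = (\<Sum>l<n. \<Sum>i<n. p (Vc b i) * zp n p k i l * (if x = a \<and> j = l then 1 else 0))"
    by (rule sum.swap)
  also have "\<dots> = (\<Sum>l<n. if l = j then (if x = a then vz n p b k l else 0) else 0)"
    by (rule sum.cong) (auto simp: vz_def)
  also have "\<dots> = kd x a * vz n p b k j"
    by (auto simp: kd_def vz_out)
  finally show ?thesis .
qed

lemma gZ: "pd (tf n k a b) p (Zc i0 j0) = (\<Sum>x<k. vz n p b x i0 * zw n p a (k - 1 - x) j0)"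
proof -
  have "pd (tf n k a b) p (Zc i0 j0) = (\<Sum>i<n. \<Sum>l<n. p (Vc b i) * dz n p (Zc i0 j0) k i l * p (Wc a l))"
    unfolding pd_tf dtt_def by simp
  also have "\<dots> = (\<Sum>i<n. \<Sum>l<n. \<Sum>x<k. (p (Vc b i) * zp n p x i i0) * (zp n p (k - 1 - x) j0 l * p (Wc a l)))"
    by (simp add: dz_Z sum_distrib_left sum_distrib_right mult.assoc)
  also have "\<dots> = (\<Sum>i<n. \<Sum>x<k. \<Sum>l<n. (p (Vc b i) * zp n p x i i0) * (zp n p (k - 1 - x) j0 l * p (Wc a l)))"
    by (rule sum.cong[OF refl], rule sum.swap)
  also have "\<dots> = (\<Sum>x<k. \<Sum>i<n. \<Sum>l<n. (p (Vc b i) * zp n p x i i0) * (zp n p (k - 1 - x) j0 l * p (Wc a l)))"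
    by (rule sum.swap)
  also have "\<dots> = (\<Sum>x<k. vz n p b x i0 * zw n p a (k - 1 - x) j0)"
    by (simp add: vz_def zw_def sum_product)
  finally show ?thesis .
qed

lemma gtrX: "pd (trZ n i) p (Xc a b) = 0"
proof -
  have e: "trZ n i = (\<lambda>p. \<Sum>j<n. zp n p i j j)" by (rule ext) (simp add: trZ_zp)
  have "((\<lambda>t. \<Sum>j<n. zp n (p(Xc a b := p (Xc a b) + t)) i j j) has_field_derivative (\<Sum>j<n. dz n p (Xc a b) i j j)) (at 0)"
    by (intro DERIV_sum dzp)
  then show ?thesis unfolding pd_def e by (simp add: DERIV_imp_deriv dz_nonZ)
qed

lemma gtrgen: "pd (trZ n i) p c = (\<Sum>j<n. dz n p c i j j)"
proof -
  have e: "trZ n i = (\<lambda>p. \<Sum>j<n. zp n p i j j)" by (rule ext) (simp add: trZ_zp)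
  have "((\<lambda>t. \<Sum>j<n. zp n (p(c := p c + t)) i j j) has_field_derivative (\<Sum>j<n. dz n p c i j j)) (at 0)"
    by (intro DERIV_sum dzp)
  then show ?thesis unfolding pd_def e by (simp add: DERIV_imp_deriv)
qed

lemma gtrZ: "pd (trZ n i) p (Zc a b) = of_nat i * zp n p (i - 1) b a"
proof -
  have "pd (trZ n i) p (Zc a b) = (\<Sum>j<n. \<Sum>x<i. zp n p (i - 1 - x) b j * zp n p x j a)"
    by (simp add: gtrgen dz_Z mult.commute)
  also have "\<dots> = (\<Sum>x<i. \<Sum>j<n. zp n p (i - 1 - x) b j * zp n p x j a)" by (rule sum.swap)
  also have "\<dots> = (\<Sum>x<i. zp n p (i - 1) b a)"
    by (rule sum.cong) (auto simp: zp_add[symmetric])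
  finally show ?thesis by simp
qed

lemma gtrV: "pd (trZ n i) p (Vc a b) = 0"
  by (simp add: gtrgen dz_nonZ)
lemma gtrW: "pd (trZ n i) p (Wc a b) = 0"
  by (simp add: gtrgen dz_nonZ)

lemma sum_coords: "(\<Sum>c\<in>coords n d. h c) =
   (\<Sum>i<n. \<Sum>j<n. h (Xc i j)) + (\<Sum>i<n. \<Sum>j<n. h (Zc i j))
 + (\<Sum>a\<in>{1..d}. \<Sum>j<n. h (Vc a j)) + (\<Sum>a\<in>{1..d}. \<Sum>j<n. h (Wc a j))"
proof -
  let ?X = "(\<lambda>(i,j). Xc i j) ` ({..<n} \<times> {..<n})"
  let ?Z = "(\<lambda>(i,j). Zc i j) ` ({..<n} \<times> {..<n})"
  let ?V = "(\<lambda>(a,j). Vc a j) ` ({1..d} \<times> {..<n})"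
  let ?W = "(\<lambda>(a,j). Wc a j) ` ({1..d} \<times> {..<n})"
  have X: "(\<Sum>c\<in>?X. h c) = (\<Sum>i<n. \<Sum>j<n. h (Xc i j))"
    by (subst sum.reindex) (auto simp: inj_on_def sum.cartesian_product intro!: sum.cong split: prod.splits)
  have Z: "(\<Sum>c\<in>?Z. h c) = (\<Sum>i<n. \<Sum>j<n. h (Zc i j))"
    by (subst sum.reindex) (auto simp: inj_on_def sum.cartesian_product intro!: sum.cong split: prod.splits)
  have V: "(\<Sum>c\<in>?V. h c) = (\<Sum>a\<in>{1..d}. \<Sum>j<n. h (Vc a j))"
    by (subst sum.reindex) (auto simp: inj_on_def sum.cartesian_product intro!: sum.cong split: prod.splits)
  have W: "(\<Sum>c\<in>?W. h c) = (\<Sum>a\<in>{1..d}. \<Sum>j<n. h (Wc a j))"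
    by (subst sum.reindex) (auto simp: inj_on_def sum.cartesian_product intro!: sum.cong split: prod.splits)
  have "(\<Sum>c\<in>coords n d. h c) = (\<Sum>c\<in>?X \<union> ?Z \<union> ?V. h c) + (\<Sum>c\<in>?W. h c)"
    unfolding coords_def by (rule sum.union_disjoint) auto
  also have "(\<Sum>c\<in>?X \<union> ?Z \<union> ?V. h c) = (\<Sum>c\<in>?X \<union> ?Z. h c) + (\<Sum>c\<in>?V. h c)"
    by (rule sum.union_disjoint) auto
  also have "(\<Sum>c\<in>?X \<union> ?Z. h c) = (\<Sum>c\<in>?X. h c) + (\<Sum>c\<in>?Z. h c)"
    by (rule sum.union_disjoint) auto
  finally show ?thesis using X Z V W by simp
qed

definition inner :: "nat \<Rightarrow> nat \<Rightarrow> point \<Rightarrow> (coord \<Rightarrow> complex) \<Rightarrow> (coord \<Rightarrow> complex) \<Rightarrow> coord \<Rightarrow> complex" where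
  "inner n d p F G c1 = (\<Sum>k<n. \<Sum>l<n. F c1 * G (Zc k l) * qpb n p c1 (Zc k l))
     + (\<Sum>x\<in>{1..d}. \<Sum>l<n. F c1 * G (Vc x l) * qpb n p c1 (Vc x l))
     + (\<Sum>x\<in>{1..d}. \<Sum>l<n. F c1 * G (Wc x l) * qpb n p c1 (Wc x l))"

lemma pbr_blocks:
  assumes "\<And>i j. pd f p (Xc i j) = 0" "\<And>i j. pd g p (Xc i j) = 0"
  shows "pbr n d f g p = (\<Sum>i<n. \<Sum>j<n. inner n d p (pd f p) (pd g p) (Zc i j))
     + (\<Sum>x\<in>{1..d}. \<Sum>j<n. inner n d p (pd f p) (pd g p) (Vc x j))
     + (\<Sum>x\<in>{1..d}. \<Sum>j<n. inner n d p (pd f p) (pd g p) (Wc x j))"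
  unfolding pbr_def sum_coords inner_def by (simp add: assms)

declare zp.simps(2)[simp del]
declare zp_one[simp]
lemma zp_Suc0[simp]: "zp n p (Suc 0) i j = zz n p i j" using zp_one by simp

lemma kd_l: "kd i j * x = (if i = j then x else 0)" by (simp add: kd_def)
lemma kd_r: "x * kd i j = (if i = j then x else 0)" by (simp add: kd_def)
lemma if0_l: "(if P then a else 0) * (z::complex) = (if P then a * z else 0)" by simp
lemma if0_r: "(z::complex) * (if P then a else 0) = (if P then z * a else 0)" by simp
lemmas kds = kd_l kd_r if0_l if0_r

lemma mm_zp2: "a < n \<Longrightarrow> e < n \<Longrightarrow> mm n (zf p) (zf p) a e = zp n p 2 a e"
proof -
  assume "a < n" "e < n"
  have "zp n p 2 a e = zp n p (1 + 1) a e" by (simp only: one_add_one)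
  also have "\<dots> = (\<Sum>m<n. zp n p 1 a m * zp n p 1 m e)" by (rule zp_add)
  also have "\<dots> = (\<Sum>m<n. zz n p a m * zz n p m e)" by simp
  also have "\<dots> = (\<Sum>m<n. zf p a m * zf p m e)"
    using \<open>a < n\<close> \<open>e < n\<close> by (auto simp: zp_one zz_def zf_def intro!: sum.cong)
  finally show ?thesis by (simp add: mm_def)
qed

lemma zf_zp1: "a < n \<Longrightarrow> e < n \<Longrightarrow> zf p a e = zp n p 1 a e"
  by (simp add: zp_one zz_def zf_def)

lemma VUv_vz: "j < n \<Longrightarrow> VUv n (zf p) p a j = vz n p a 1 j"
  by (auto simp: VUv_def vz_def zp_one zz_def zf_def vf_def intro!: sum.cong)
lemma UWv_zw: "j < n \<Longrightarrow> UWv n (zf p) p a j = zw n p a 1 j"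
  by (auto simp: UWv_def zw_def zp_one zz_def zf_def wf_def intro!: sum.cong)
lemma VW_tt: "VW n p a b = tt n p 0 b a"
  by (auto simp: VW_def tt_V zw0 vf_def wf_def intro!: sum.cong)

lemma P1ZZ:
  assumes "c < n" "e < n"
  shows "(\<Sum>a<n. \<Sum>b<n. zp n p m b a * qpb n p (Zc a b) (Zc c e)) = 0"
proof -
  have "(\<Sum>a<n. \<Sum>b<n. zp n p m b a * qpb n p (Zc a b) (Zc c e))
     = (\<Sum>a<n. \<Sum>b<n. (1/2) * (kd c b * (zp n p m b a * zp n p 2 a e)))
     - (\<Sum>a<n. \<Sum>b<n. (1/2) * (kd a e * (zp n p 2 c b * zp n p m b a)))"
    unfolding sum_subtractf[symmetric]
    by (intro sum.cong refl) (use assms in \<open>auto simp: mm_zp2 algebra_simps\<close>)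
  also have "(\<Sum>a<n. \<Sum>b<n. (1/2) * (kd c b * (zp n p m b a * zp n p 2 a e))) = (1/2) * (\<Sum>a<n. zp n p m c a * zp n p 2 a e)"
    using assms by (simp add: kds sum_distrib_left)
  also have "\<dots> = (1/2) * zp n p (m + 2) c e" by (simp only: zp_add)
  also have "(\<Sum>a<n. \<Sum>b<n. (1/2) * (kd a e * (zp n p 2 c b * zp n p m b a))) = (1/2) * (\<Sum>b<n. zp n p 2 c b * zp n p m b e)"
    using assms by (subst sum.swap) (simp add: kds sum_distrib_left)
  also have "\<dots> = (1/2) * zp n p (m + 2) c e" by (subst add.commute) (simp only: zp_add)
  finally show ?thesis by simp
qed

lemma P1ZV:
  assumes "l < n"
  shows "(\<Sum>a<n. \<Sum>b<n. zp n p m b a * brUV n (zf p) p a b x l) = 0"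
proof -
  have "(\<Sum>a<n. \<Sum>b<n. zp n p m b a * brUV n (zf p) p a b x l)
     = (\<Sum>a<n. \<Sum>b<n. (1/2) * (kd a l * (vz n p x 1 b * zp n p m b a)))
     - (\<Sum>a<n. \<Sum>b<n. (1/2) * (p (Vc x b) * (zp n p m b a * zp n p 1 a l)))"
    unfolding sum_subtractf[symmetric]
    by (intro sum.cong refl) (use assms in \<open>auto simp: brUV_def VUv_vz zf_zp1 vf_def algebra_simps\<close>)
  also have "(\<Sum>a<n. \<Sum>b<n. (1/2) * (kd a l * (vz n p x 1 b * zp n p m b a))) = (1/2) * (\<Sum>b<n. vz n p x 1 b * zp n p m b l)"
    using assms by (subst sum.swap) (simp add: kds sum_distrib_left)
  also have "\<dots> = (1/2) * vz n p x (m + 1) l" by (subst add.commute) (simp only: vz_add)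
  also have "(\<Sum>a<n. \<Sum>b<n. (1/2) * (p (Vc x b) * (zp n p m b a * zp n p 1 a l)))
      = (1/2) * (\<Sum>b<n. p (Vc x b) * (\<Sum>a<n. zp n p m b a * zp n p 1 a l))"
    by (subst sum.swap) (simp add: sum_distrib_left)
  also have "\<dots> = (1/2) * vz n p x (m + 1) l" by (simp only: zp_add[symmetric] vz_def)
  finally show ?thesis by simp
qed

lemma P1ZW:
  assumes "k < n"
  shows "(\<Sum>a<n. \<Sum>b<n. zp n p m b a * brUW n (zf p) p a b x k) = 0"
proof -
  have "(\<Sum>a<n. \<Sum>b<n. zp n p m b a * brUW n (zf p) p a b x k)
     = (\<Sum>a<n. \<Sum>b<n. (1/2) * (kd k b * (zp n p m b a * zw n p x 1 a)))
     - (\<Sum>a<n. \<Sum>b<n. (1/2) * ((zp n p 1 k b * zp n p m b a) * p (Wc x a)))"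
    unfolding sum_subtractf[symmetric]
    by (intro sum.cong refl) (use assms in \<open>auto simp: brUW_def UWv_zw zf_zp1 wf_def algebra_simps\<close>)
  also have "(\<Sum>a<n. \<Sum>b<n. (1/2) * (kd k b * (zp n p m b a * zw n p x 1 a))) = (1/2) * (\<Sum>a<n. zp n p m k a * zw n p x 1 a)"
    using assms by (simp add: kds sum_distrib_left)
  also have "\<dots> = (1/2) * zw n p x (m + 1) k" by (simp only: zw_add)
  also have "(\<Sum>a<n. \<Sum>b<n. (1/2) * ((zp n p 1 k b * zp n p m b a) * p (Wc x a)))
      = (1/2) * (\<Sum>a<n. (\<Sum>b<n. zp n p 1 k b * zp n p m b a) * p (Wc x a))"
    by (simp add: sum_distrib_left sum_distrib_right)
  also have "\<dots> = (1/2) * zw n p x (m + 1) k" by (subst add.commute) (simp only: zp_add[symmetric] zw_def)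
  finally show ?thesis by simp
qed

lemma swap4: "(\<Sum>a\<in>A. \<Sum>b\<in>B. \<Sum>c\<in>C. \<Sum>e\<in>E. h a b c e) = (\<Sum>c\<in>C. \<Sum>e\<in>E. \<Sum>a\<in>A. \<Sum>b\<in>B. h a b c e)"
proof -
  have "(\<Sum>a\<in>A. \<Sum>b\<in>B. \<Sum>c\<in>C. \<Sum>e\<in>E. h a b c e) = (\<Sum>a\<in>A. \<Sum>c\<in>C. \<Sum>b\<in>B. \<Sum>e\<in>E. h a b c e)"
    by (rule sum.cong[OF refl], rule sum.swap)
  also have "\<dots> = (\<Sum>c\<in>C. \<Sum>a\<in>A. \<Sum>b\<in>B. \<Sum>e\<in>E. h a b c e)" by (rule sum.swap)
  also have "\<dots> = (\<Sum>c\<in>C. \<Sum>a\<in>A. \<Sum>e\<in>E. \<Sum>b\<in>B. h a b c e)"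
    by (intro sum.cong refl, rule sum.swap)
  also have "\<dots> = (\<Sum>c\<in>C. \<Sum>e\<in>E. \<Sum>a\<in>A. \<Sum>b\<in>B. h a b c e)"
    by (rule sum.cong[OF refl], rule sum.swap)
  finally show ?thesis .
qed

lemma part1:
  assumes "i \<ge> 1"
  shows "pbr n d (trZ n i) (tf n k b a) p = 0"
proof -
  let ?F = "pd (trZ n i) p" and ?G = "pd (tf n k b a) p"
  have V: "inner n d p ?F ?G (Vc x j) = 0" for x j by (simp add: inner_def gtrV)
  have W: "inner n d p ?F ?G (Wc x j) = 0" for x j by (simp add: inner_def gtrW)
  have Z1: "(\<Sum>u<n. \<Sum>v<n. \<Sum>c<n. \<Sum>e<n. ?F (Zc u v) * ?G (Zc c e) * qpb n p (Zc u v) (Zc c e)) = 0"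
  proof -
    have "(\<Sum>u<n. \<Sum>v<n. \<Sum>c<n. \<Sum>e<n. ?F (Zc u v) * ?G (Zc c e) * qpb n p (Zc u v) (Zc c e))
      = (\<Sum>c<n. \<Sum>e<n. ?G (Zc c e) * of_nat i * (\<Sum>u<n. \<Sum>v<n. zp n p (i - 1) v u * qpb n p (Zc u v) (Zc c e)))"
      by (subst swap4) (simp add: gtrZ sum_distrib_left mult_ac)
    also have "\<dots> = 0" by (intro sum.neutral ballI) (simp only: lessThan_iff P1ZZ mult_zero_right)
    finally show ?thesis .
  qed
  have Z2: "(\<Sum>u<n. \<Sum>v<n. \<Sum>x\<in>{1..d}. \<Sum>l<n. ?F (Zc u v) * ?G (Vc x l) * qpb n p (Zc u v) (Vc x l)) = 0"
  proof -
    have "(\<Sum>u<n. \<Sum>v<n. \<Sum>x\<in>{1..d}. \<Sum>l<n. ?F (Zc u v) * ?G (Vc x l) * qpb n p (Zc u v) (Vc x l))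
      = (\<Sum>x\<in>{1..d}. \<Sum>l<n. ?G (Vc x l) * of_nat i * (\<Sum>u<n. \<Sum>v<n. zp n p (i - 1) v u * brUV n (zf p) p u v x l))"
      by (subst swap4) (simp add: gtrZ sum_distrib_left mult_ac)
    also have "\<dots> = 0" by (intro sum.neutral ballI) (simp only: lessThan_iff P1ZV mult_zero_right)
    finally show ?thesis .
  qed
  have Z3: "(\<Sum>u<n. \<Sum>v<n. \<Sum>x\<in>{1..d}. \<Sum>l<n. ?F (Zc u v) * ?G (Wc x l) * qpb n p (Zc u v) (Wc x l)) = 0"
  proof -
    have "(\<Sum>u<n. \<Sum>v<n. \<Sum>x\<in>{1..d}. \<Sum>l<n. ?F (Zc u v) * ?G (Wc x l) * qpb n p (Zc u v) (Wc x l))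
      = (\<Sum>x\<in>{1..d}. \<Sum>l<n. ?G (Wc x l) * of_nat i * (\<Sum>u<n. \<Sum>v<n. zp n p (i - 1) v u * brUW n (zf p) p u v x l))"
      by (subst swap4) (simp add: gtrZ sum_distrib_left mult_ac)
    also have "\<dots> = 0" by (intro sum.neutral ballI) (simp only: lessThan_iff P1ZW mult_zero_right)
    finally show ?thesis .
  qed
  have "pbr n d (trZ n i) (tf n k b a) p = (\<Sum>u<n. \<Sum>v<n. inner n d p ?F ?G (Zc u v))"
    by (simp add: pbr_blocks gtrX gX V W)
  also have "\<dots> = 0" unfolding inner_def sum.distrib Z1 Z2 Z3 by simp
  finally show ?thesis .
qed

lemma pre_shift: "(\<Sum>i<k. (W::nat \<Rightarrow> complex) (c + i)) = (\<Sum>i<c + k. W i) - (\<Sum>i<c. W i)"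
  by (induction k) (simp_all add: algebra_simps)

lemma tel2: "(\<Sum>r<l. (W::nat \<Rightarrow> complex) (a + r) - W (a + r + 2)) = W a + W (a+1) - W (a+l) - W (a+(l+1))"
  by (induction l) (simp_all add: algebra_simps)

lemma ZZcomb:
  fixes T U :: "nat \<Rightarrow> complex"
  assumes k: "k \<ge> 1" and l: "l \<ge> 1"
  shows "(\<Sum>m<k. \<Sum>r<l. T (r + (k - 1 - m)) * U (m + (2 + (l - 1 - r))) - U (m + (l - 1 - r)) * T (r + (2 + (k - 1 - m))))
   = ((\<Sum>\<tau>=1..k. T (k-\<tau>) * U (l+\<tau>)) - (\<Sum>\<tau>=1..k-1. T (k+l-\<tau>) * U \<tau>))
   - ((\<Sum>\<sigma>=1..l. T (k+\<sigma>) * U (l-\<sigma>)) - (\<Sum>\<sigma>=1..l-1. T \<sigma> * U (k+l-\<sigma>)))"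
proof -
  define W where "W i = T i * U (k + l - i)" for i
  define F where "F x = (\<Sum>i<x. W i)" for x
  have ps: "(\<Sum>i<x. W (c + i)) = F (c + x) - F c" for x c by (simp add: F_def pre_shift)
  have ps': "(\<Sum>i<x. W (i + c)) = F (c + x) - F c" for x c
    using ps[where x=x and c=c] by (simp only: add.commute[of _ c])
  have inner: "(\<Sum>r<l. T (r + (k - 1 - m)) * U (m + (2 + (l - 1 - r))) - U (m + (l - 1 - r)) * T (r + (2 + (k - 1 - m))))
      = W (k - Suc m) + W (k - Suc m + 1) - W (k - Suc m + l) - W (k - Suc m + (l + 1))" if "m < k" for m
  proof -
    have "(\<Sum>r<l. T (r + (k - 1 - m)) * U (m + (2 + (l - 1 - r))) - U (m + (l - 1 - r)) * T (r + (2 + (k - 1 - m))))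
       = (\<Sum>r<l. W (k - Suc m + r) - W (k - Suc m + r + 2))"
    proof (rule sum.cong[OF refl])
      fix r assume "r \<in> {..<l}"
      then have r: "r < l" by simp
      have e1: "k + l - (k - Suc m + r) = m + (2 + (l - 1 - r))" using r that by arith
      have e2: "k + l - (k - Suc m + r + 2) = m + (l - 1 - r)" using r that by arith
      have e3: "r + (k - 1 - m) = k - Suc m + r" "r + (2 + (k - 1 - m)) = k - Suc m + r + 2" by arith+
      show "T (r + (k - 1 - m)) * U (m + (2 + (l - 1 - r))) - U (m + (l - 1 - r)) * T (r + (2 + (k - 1 - m)))
          = W (k - Suc m + r) - W (k - Suc m + r + 2)"
        unfolding W_def e1 e2 e3 by (simp add: mult.commute)
    qed
    then show ?thesis by (simp only: tel2)
  qed
  have "(\<Sum>m<k. \<Sum>r<l. T (r + (k - 1 - m)) * U (m + (2 + (l - 1 - r))) - U (m + (l - 1 - r)) * T (r + (2 + (k - 1 - m))))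
     = (\<Sum>m<k. W (k - Suc m) + W (k - Suc m + 1) - W (k - Suc m + l) - W (k - Suc m + (l + 1)))"
    by (rule sum.cong[OF refl]) (simp only: inner lessThan_iff)
  also have "\<dots> = (\<Sum>m<k. W m + W (m + 1) - W (m + l) - W (m + (l + 1)))"
    by (rule sum.nat_diff_reindex[where g = "\<lambda>m. W m + W (m + 1) - W (m + l) - W (m + (l + 1))"])
  also have "\<dots> = F k + (F (1 + k) - F 1) - (F (l + k) - F l) - (F (l + 1 + k) - F (l + 1))"
    by (simp only: sum.distrib sum_subtractf ps') (simp add: F_def)
  finally have L: "(\<Sum>m<k. \<Sum>r<l. T (r + (k - 1 - m)) * U (m + (2 + (l - 1 - r))) - U (m + (l - 1 - r)) * T (r + (2 + (k - 1 - m))))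
     = F k + (F (1 + k) - F 1) - (F (l + k) - F l) - (F (l + 1 + k) - F (l + 1))" .
  have a: "(\<Sum>\<tau>=1..k. T (k-\<tau>) * U (l+\<tau>)) = F k"
  proof -
    have "(\<Sum>\<tau>=1..k. T (k-\<tau>) * U (l+\<tau>)) = (\<Sum>i<k. T (k - Suc i) * U (l + Suc i))"
      using sum.atLeast1_atMost_eq[of "\<lambda>\<tau>. T (k-\<tau>) * U (l+\<tau>)" k] by simp
    also have "\<dots> = (\<Sum>i<k. W (k - Suc i))" by (rule sum.cong) (auto simp: W_def)
    also have "\<dots> = F k" unfolding F_def by (rule sum.nat_diff_reindex)
    finally show ?thesis .
  qed
  have b: "(\<Sum>\<tau>=1..k-1. T (k+l-\<tau>) * U \<tau>) = F (l + 1 + (k - 1)) - F (l + 1)"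
  proof -
    have "(\<Sum>\<tau>=1..k-1. T (k+l-\<tau>) * U \<tau>) = (\<Sum>i<k-1. T (k + l - Suc i) * U (Suc i))"
      using sum.atLeast1_atMost_eq[of "\<lambda>\<tau>. T (k+l-\<tau>) * U \<tau>" "k-1"] by simp
    also have "\<dots> = (\<Sum>i<k-1. W (l + 1 + (k - 1 - Suc i)))"
    proof (rule sum.cong[OF refl])
      fix i assume "i \<in> {..<k-1}"
      then have e: "l + 1 + (k - 1 - Suc i) = k + l - Suc i" "k + l - (k + l - Suc i) = Suc i" by auto
      show "T (k + l - Suc i) * U (Suc i) = W (l + 1 + (k - 1 - Suc i))" by (simp only: W_def e)
    qed
    also have "\<dots> = (\<Sum>i<k-1. W (l + 1 + i))"
      by (rule sum.nat_diff_reindex[where g = "\<lambda>i. W (l + 1 + i)"])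
    also have "\<dots> = F (l + 1 + (k - 1)) - F (l + 1)" by (rule ps)
    finally show ?thesis .
  qed
  have c: "(\<Sum>\<sigma>=1..l. T (k+\<sigma>) * U (l-\<sigma>)) = F (k + 1 + l) - F (k + 1)"
  proof -
    have "(\<Sum>\<sigma>=1..l. T (k+\<sigma>) * U (l-\<sigma>)) = (\<Sum>i<l. T (k + Suc i) * U (l - Suc i))"
      using sum.atLeast1_atMost_eq[of "\<lambda>\<sigma>. T (k+\<sigma>) * U (l-\<sigma>)" l] by simp
    also have "\<dots> = (\<Sum>i<l. W (k + 1 + i))" by (rule sum.cong) (auto simp: W_def)
    also have "\<dots> = F (k + 1 + l) - F (k + 1)" by (rule ps)
    finally show ?thesis .
  qed
  have d: "(\<Sum>\<sigma>=1..l-1. T \<sigma> * U (k+l-\<sigma>)) = F (1 + (l - 1)) - F 1"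
  proof -
    have "(\<Sum>\<sigma>=1..l-1. T \<sigma> * U (k+l-\<sigma>)) = (\<Sum>i<l-1. T (Suc i) * U (k + l - Suc i))"
      using sum.atLeast1_atMost_eq[of "\<lambda>\<sigma>. T \<sigma> * U (k+l-\<sigma>)" "l-1"] by simp
    also have "\<dots> = (\<Sum>i<l-1. W (1 + i))" by (rule sum.cong) (auto simp: W_def)
    also have "\<dots> = F (1 + (l - 1)) - F 1" by (rule ps)
    finally show ?thesis .
  qed
  have e1: "l + 1 + (k - 1) = l + k" "1 + (l - 1) = l" using k l by auto
  show ?thesis unfolding L a b c d e1 by (simp add: algebra_simps)
qed

lemma sum_single: "e \<in> A \<Longrightarrow> finite A \<Longrightarrow> (\<And>x. x \<in> A \<Longrightarrow> x \<noteq> e \<Longrightarrow> h x = 0) \<Longrightarrow> sum h A = h e"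
  by (simp add: sum.remove sum.neutral)

lemma fact2: "(\<Sum>j<n. \<Sum>l<n. c * (A j * B l)) = (c::complex) * ((\<Sum>j<n. A j) * (\<Sum>l<n. B l))"
  by (simp only: sum_product) (simp only: sum_distrib_left)

lemma BVV:
  assumes e: "e \<in> {1..d}" and b: "b \<in> {1..d}"
  shows "(\<Sum>x\<in>{1..d}. \<Sum>j<n. \<Sum>y\<in>{1..d}. \<Sum>l'<n. pd (tf n k g e) p (Vc x j) * pd (tf n l a b) p (Vc y l') * qpb n p (Vc x j) (Vc y l'))
    = (1/2) * ord_sign b e * (tt n p k g b * tt n p l a e + tt n p k g e * tt n p l a b)"
proof -
  have "(\<Sum>x\<in>{1..d}. \<Sum>j<n. \<Sum>y\<in>{1..d}. \<Sum>l'<n. pd (tf n k g e) p (Vc x j) * pd (tf n l a b) p (Vc y l') * qpb n p (Vc x j) (Vc y l'))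
    = (\<Sum>j<n. \<Sum>y\<in>{1..d}. \<Sum>l'<n. pd (tf n k g e) p (Vc e j) * pd (tf n l a b) p (Vc y l') * qpb n p (Vc e j) (Vc y l'))"
    by (rule sum_single[OF e]) (auto simp: gV kd_def)
  also have "\<dots> = (\<Sum>j<n. \<Sum>l'<n. pd (tf n k g e) p (Vc e j) * pd (tf n l a b) p (Vc b l') * qpb n p (Vc e j) (Vc b l'))"
    by (rule sum.cong[OF refl], rule sum_single[OF b]) (auto simp: gV kd_def)
  also have "\<dots> = (\<Sum>j<n. \<Sum>l'<n. ((1/2) * ord_sign b e) * ((p (Vc b j) * zw n p g k j) * (p (Vc e l') * zw n p a l l'))
                    + ((1/2) * ord_sign b e) * ((p (Vc e j) * zw n p g k j) * (p (Vc b l') * zw n p a l l')))"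
    by (intro sum.cong refl) (simp add: gV kd_def vf_def algebra_simps)
  also have "\<dots> = (1/2) * ord_sign b e * (tt n p k g b * tt n p l a e + tt n p k g e * tt n p l a b)"
    by (simp only: sum.distrib fact2 tt_V[symmetric]) (simp add: algebra_simps)
  finally show ?thesis .
qed

lemma BWW:
  assumes g: "g \<in> {1..d}" and a: "a \<in> {1..d}"
  shows "(\<Sum>x\<in>{1..d}. \<Sum>j<n. \<Sum>y\<in>{1..d}. \<Sum>l'<n. pd (tf n k g e) p (Wc x j) * pd (tf n l a b) p (Wc y l') * qpb n p (Wc x j) (Wc y l'))
    = (1/2) * ord_sign a g * (tt n p k g e * tt n p l a b + tt n p k a e * tt n p l g b)"
proof -
  have "(\<Sum>x\<in>{1..d}. \<Sum>j<n. \<Sum>y\<in>{1..d}. \<Sum>l'<n. pd (tf n k g e) p (Wc x j) * pd (tf n l a b) p (Wc y l') * qpb n p (Wc x j) (Wc y l'))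
    = (\<Sum>j<n. \<Sum>y\<in>{1..d}. \<Sum>l'<n. pd (tf n k g e) p (Wc g j) * pd (tf n l a b) p (Wc y l') * qpb n p (Wc g j) (Wc y l'))"
    by (rule sum_single[OF g]) (auto simp: gW kd_def)
  also have "\<dots> = (\<Sum>j<n. \<Sum>l'<n. pd (tf n k g e) p (Wc g j) * pd (tf n l a b) p (Wc a l') * qpb n p (Wc g j) (Wc a l'))"
    by (rule sum.cong[OF refl], rule sum_single[OF a]) (auto simp: gW kd_def)
  also have "\<dots> = (\<Sum>j<n. \<Sum>l'<n. ((1/2) * ord_sign a g) * ((vz n p e k j * p (Wc g j)) * (vz n p b l l' * p (Wc a l')))
                    + ((1/2) * ord_sign a g) * ((vz n p e k j * p (Wc a j)) * (vz n p b l l' * p (Wc g l'))))"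
    by (intro sum.cong refl) (simp add: gW kd_def wf_def algebra_simps)
  also have "\<dots> = (1/2) * ord_sign a g * (tt n p k g e * tt n p l a b + tt n p k a e * tt n p l g b)"
    by (simp only: sum.distrib fact2 tt_W[symmetric]) (simp add: algebra_simps)
  finally show ?thesis .
qed

lemma diag1: "(\<Sum>j<n. \<Sum>l<n. c * (A j * kd l j)) = (c::complex) * (\<Sum>j<n. A j)"
  by (simp add: kds sum_distrib_left)
lemma diag3: "(\<Sum>j<n. \<Sum>l<n. c * (A j * B l * kd j l)) = (c::complex) * (\<Sum>j<n. A j * B j)"
  by (simp add: kds sum_distrib_left)

lemma BVW:
  assumes e: "e \<in> {1..d}" and a: "a \<in> {1..d}"
  shows "(\<Sum>x\<in>{1..d}. \<Sum>j<n. \<Sum>y\<in>{1..d}. \<Sum>l'<n. pd (tf n k g e) p (Vc x j) * pd (tf n l a b) p (Wc y l') * qpb n p (Vc x j) (Wc y l'))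
    = kd e a * (tt n p (l + k) g b + (1/2) * (tt n p k g e * tt n p l e b) + (1/2) * (tt n p (l + k) g b * tt n p 0 e e))
      + (1/2) * ord_sign e a * (tt n p (l + k) g b * tt n p 0 a e + tt n p k g e * tt n p l a b)"
proof -
  have "(\<Sum>x\<in>{1..d}. \<Sum>j<n. \<Sum>y\<in>{1..d}. \<Sum>l'<n. pd (tf n k g e) p (Vc x j) * pd (tf n l a b) p (Wc y l') * qpb n p (Vc x j) (Wc y l'))
    = (\<Sum>j<n. \<Sum>y\<in>{1..d}. \<Sum>l'<n. pd (tf n k g e) p (Vc e j) * pd (tf n l a b) p (Wc y l') * qpb n p (Vc e j) (Wc y l'))"
    by (rule sum_single[OF e]) (auto simp: gV kd_def)
  also have "\<dots> = (\<Sum>j<n. \<Sum>l'<n. pd (tf n k g e) p (Vc e j) * pd (tf n l a b) p (Wc a l') * qpb n p (Vc e j) (Wc a l'))"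
    by (rule sum.cong[OF refl], rule sum_single[OF a]) (auto simp: gW kd_def)
  also have "\<dots> = (\<Sum>j<n. \<Sum>l'<n. kd e a * ((vz n p b l j * zw n p g k j) * kd l' j)
       + (kd e a * (1/2)) * ((p (Vc e j) * zw n p g k j) * (vz n p b l l' * p (Wc e l')))
       + (kd e a * (1/2) * tt n p 0 e e) * ((vz n p b l j * zw n p g k j) * kd l' j)
       + ((1/2) * ord_sign e a * tt n p 0 a e) * ((vz n p b l j * zw n p g k j) * kd l' j)
       + ((1/2) * ord_sign e a) * ((p (Vc e j) * zw n p g k j) * (vz n p b l l' * p (Wc a l'))))"
    by (intro sum.cong refl) (simp add: gV gW brVW_def VW_tt kd_def vf_def wf_def algebra_simps)
  also have "\<dots> = kd e a * (tt n p (l + k) g b + (1/2) * (tt n p k g e * tt n p l e b) + (1/2) * (tt n p (l + k) g b * tt n p 0 e e))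
      + (1/2) * ord_sign e a * (tt n p (l + k) g b * tt n p 0 a e + tt n p k g e * tt n p l a b)"
    by (simp only: sum.distrib fact2 diag1 tt_V[symmetric] tt_W[symmetric] contr) (simp add: algebra_simps)
  finally show ?thesis .
qed

lemma BWV:
  assumes g: "g \<in> {1..d}" and b: "b \<in> {1..d}"
  shows "(\<Sum>x\<in>{1..d}. \<Sum>j<n. \<Sum>y\<in>{1..d}. \<Sum>l'<n. pd (tf n k g e) p (Wc x j) * pd (tf n l a b) p (Vc y l') * qpb n p (Wc x j) (Vc y l'))
    = - (kd b g * (tt n p (k + l) a e + (1/2) * (tt n p k b e * tt n p l a b) + (1/2) * (tt n p (k + l) a e * tt n p 0 b b))
      + (1/2) * ord_sign b g * (tt n p (k + l) a e * tt n p 0 g b + tt n p k g e * tt n p l a b))"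
proof -
  have "(\<Sum>x\<in>{1..d}. \<Sum>j<n. \<Sum>y\<in>{1..d}. \<Sum>l'<n. pd (tf n k g e) p (Wc x j) * pd (tf n l a b) p (Vc y l') * qpb n p (Wc x j) (Vc y l'))
    = (\<Sum>j<n. \<Sum>y\<in>{1..d}. \<Sum>l'<n. pd (tf n k g e) p (Wc g j) * pd (tf n l a b) p (Vc y l') * qpb n p (Wc g j) (Vc y l'))"
    by (rule sum_single[OF g]) (auto simp: gW kd_def)
  also have "\<dots> = (\<Sum>j<n. \<Sum>l'<n. pd (tf n k g e) p (Wc g j) * pd (tf n l a b) p (Vc b l') * qpb n p (Wc g j) (Vc b l'))"
    by (rule sum.cong[OF refl], rule sum_single[OF b]) (auto simp: gV kd_def)
  also have "\<dots> = (\<Sum>j<n. \<Sum>l'<n. (- kd b g) * (vz n p e k j * zw n p a l l' * kd j l')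
       + (- kd b g * (1/2)) * ((vz n p e k j * p (Wc b j)) * (p (Vc b l') * zw n p a l l'))
       + (- kd b g * (1/2) * tt n p 0 b b) * (vz n p e k j * zw n p a l l' * kd j l')
       + (- (1/2) * ord_sign b g * tt n p 0 g b) * (vz n p e k j * zw n p a l l' * kd j l')
       + (- (1/2) * ord_sign b g) * ((vz n p e k j * p (Wc g j)) * (p (Vc b l') * zw n p a l l')))"
    by (intro sum.cong refl) (simp add: gV gW brVW_def VW_tt kd_def vf_def wf_def algebra_simps)
  also have "\<dots> = - (kd b g * (tt n p (k + l) a e + (1/2) * (tt n p k b e * tt n p l a b) + (1/2) * (tt n p (k + l) a e * tt n p 0 b b))
      + (1/2) * ord_sign b g * (tt n p (k + l) a e * tt n p 0 g b + tt n p k g e * tt n p l a b))"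
    by (simp only: sum.distrib fact2 diag3 tt_V[symmetric] tt_W[symmetric] contr) (simp add: algebra_simps)
  finally show ?thesis .
qed


lemma TEL:
  fixes T U :: "nat \<Rightarrow> complex"
  shows "(\<Sum>m<k. U (m+l) * T (1+(k-1-m)) - T (k-1-m) * U (m + Suc l))
       + (\<Sum>m<k. U (m+1) * T (l+(k-1-m)) - U m * T (Suc l + (k-1-m)))
       - (\<Sum>r<l. T (r+k) * U (1+(l-1-r)) - T (r + Suc k) * U (l-1-r))
       - (\<Sum>r<l. T (r+1) * U (k+(l-1-r)) - T r * U (Suc k + (l-1-r))) = 0"
proof -
  define P1 where "P1 m = U (m+l) * T (k-m)" for m
  define P2 where "P2 m = U m * T (k+l-m)" for m
  define P3 where "P3 r = T (r+k) * U (l-r)" for r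
  define P4 where "P4 r = T r * U (k+l-r)" for r
  have s1: "(\<Sum>m<k. U (m+l) * T (1+(k-1-m)) - T (k-1-m) * U (m + Suc l)) = U l * T k - U (k+l) * T 0"
  proof -
    have "(\<Sum>m<k. U (m+l) * T (1+(k-1-m)) - T (k-1-m) * U (m + Suc l))
        = (\<Sum>m<k. P1 m - P1 (Suc m))"
      by (rule sum.cong) (auto simp: P1_def Suc_diff_Suc mult.commute)
    then show ?thesis by (simp only: sum_lessThan_telescope') (simp add: P1_def add.commute)
  qed
  have s2: "(\<Sum>m<k. U (m+1) * T (l+(k-1-m)) - U m * T (Suc l + (k-1-m))) = U k * T l - U 0 * T (k+l)"
  proof -
    have "(\<Sum>m<k. U (m+1) * T (l+(k-1-m)) - U m * T (Suc l + (k-1-m)))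
        = (\<Sum>m<k. P2 (Suc m) - P2 m)"
    proof (rule sum.cong[OF refl])
      fix m assume "m \<in> {..<k}"
      then have e: "l + (k-1-m) = k+l-Suc m" "Suc l + (k-1-m) = k+l-m" "m + 1 = Suc m" by auto
      show "U (m+1) * T (l+(k-1-m)) - U m * T (Suc l + (k-1-m)) = P2 (Suc m) - P2 m"
        unfolding P2_def e by simp
    qed
    then show ?thesis by (simp only: sum_lessThan_telescope) (simp add: P2_def)
  qed
  have s3: "(\<Sum>r<l. T (r+k) * U (1+(l-1-r)) - T (r + Suc k) * U (l-1-r)) = T k * U l - T (l+k) * U 0"
  proof -
    have "(\<Sum>r<l. T (r+k) * U (1+(l-1-r)) - T (r + Suc k) * U (l-1-r))
        = (\<Sum>r<l. P3 r - P3 (Suc r))"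
      by (rule sum.cong) (auto simp: P3_def Suc_diff_Suc)
    then show ?thesis by (simp only: sum_lessThan_telescope') (simp add: P3_def add.commute)
  qed
  have s4: "(\<Sum>r<l. T (r+1) * U (k+(l-1-r)) - T r * U (Suc k + (l-1-r))) = T l * U k - T 0 * U (k+l)"
  proof -
    have "(\<Sum>r<l. T (r+1) * U (k+(l-1-r)) - T r * U (Suc k + (l-1-r)))
        = (\<Sum>r<l. P4 (Suc r) - P4 r)"
    proof (rule sum.cong[OF refl])
      fix r assume "r \<in> {..<l}"
      then have e: "k + (l-1-r) = k+l-Suc r" "Suc k + (l-1-r) = k+l-r" "r + 1 = Suc r" by auto
      show "T (r+1) * U (k+(l-1-r)) - T r * U (Suc k + (l-1-r)) = P4 (Suc r) - P4 r"
        unfolding P4_def e by simp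
    qed
    then show ?thesis by (simp only: sum_lessThan_telescope) (simp add: P4_def)
  qed
  show ?thesis unfolding s1 s2 s3 s4 by (simp add: algebra_simps)
qed




lemma pull1: fixes f :: "'b \<Rightarrow> complex" shows "(\<Sum>w\<in>W. (\<Sum>m\<in>M. f m) * h w) = (\<Sum>m\<in>M. \<Sum>w\<in>W. f m * h w)"
  by (simp add: sum_distrib_right) (rule sum.swap)

lemma K1: "(\<Sum>u<n. \<Sum>v<n. \<Sum>w<n. c * ((A u * C w * kd u w) * D v)) = (c::complex) * ((\<Sum>u<n. A u * C u) * (\<Sum>v<n. D v))"
  by (auto simp: kds sum_product sum_distrib_left sum_distrib_right mult_ac intro!: sum.cong)

lemma K2: "(\<Sum>u<n. \<Sum>v<n. \<Sum>w<n. c * (D v * (A u * (E u w * C w)))) = (c::complex) * ((\<Sum>v<n. D v) * (\<Sum>u<n. A u * (\<Sum>w<n. E u w * C w)))"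
proof -
  define X where "X u = A u * (\<Sum>w<n. E u w * C w)" for u
  have "(\<Sum>u<n. \<Sum>v<n. \<Sum>w<n. c * (D v * (A u * (E u w * C w)))) = (\<Sum>u<n. \<Sum>v<n. c * (D v * X u))"
    by (simp add: X_def sum_distrib_left)
  also have "\<dots> = (\<Sum>v<n. \<Sum>u<n. c * (D v * X u))" by (rule sum.swap)
  also have "\<dots> = c * ((\<Sum>v<n. D v) * (\<Sum>u<n. X u))" by (rule fact2)
  finally show ?thesis by (simp add: X_def)
qed

lemma pull3: fixes f :: "'b \<Rightarrow> 'c \<Rightarrow> 'd \<Rightarrow> complex" shows "(\<Sum>u\<in>U. \<Sum>v\<in>V. \<Sum>w\<in>W. (\<Sum>m\<in>M. f m u v) * h u v w) = (\<Sum>m\<in>M. \<Sum>u\<in>U. \<Sum>v\<in>V. \<Sum>w\<in>W. f m u v * h u v w)"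
proof -
  have "(\<Sum>u\<in>U. \<Sum>v\<in>V. \<Sum>w\<in>W. (\<Sum>m\<in>M. f m u v) * h u v w) = (\<Sum>u\<in>U. \<Sum>v\<in>V. \<Sum>m\<in>M. \<Sum>w\<in>W. f m u v * h u v w)"
    by (intro sum.cong refl) (rule pull1)
  also have "\<dots> = (\<Sum>u\<in>U. \<Sum>m\<in>M. \<Sum>v\<in>V. \<Sum>w\<in>W. f m u v * h u v w)"
    by (rule sum.cong[OF refl], rule sum.swap)
  also have "\<dots> = (\<Sum>m\<in>M. \<Sum>u\<in>U. \<Sum>v\<in>V. \<Sum>w\<in>W. f m u v * h u v w)" by (rule sum.swap)
  finally show ?thesis .
qed

lemma BZV_m:
  "(\<Sum>u<n. \<Sum>v<n. \<Sum>w<n. vz n p e m u * zw n p g s v * (zw n p a l w * qpb n p (Zc u v) (Vc b w)))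
   = (1/2) * (tt n p (m + l) a e * tt n p (1 + s) g b) - (1/2) * (tt n p s g b * tt n p (m + Suc l) a e)"
proof -
  have "(\<Sum>u<n. \<Sum>v<n. \<Sum>w<n. vz n p e m u * zw n p g s v * (zw n p a l w * qpb n p (Zc u v) (Vc b w)))
     = (\<Sum>u<n. \<Sum>v<n. \<Sum>w<n. (1/2) * ((vz n p e m u * zw n p a l w * kd u w) * (vz n p b 1 v * zw n p g s v)))
     - (\<Sum>u<n. \<Sum>v<n. \<Sum>w<n. (1/2) * ((p (Vc b v) * zw n p g s v) * (vz n p e m u * (zz n p u w * zw n p a l w))))"
    unfolding sum_subtractf[symmetric]
    by (intro sum.cong refl) (simp add: brUV_def VUv_vz zz_def zf_def vf_def algebra_simps)
  also have "\<dots> = (1/2) * (tt n p (m + l) a e * tt n p (1 + s) g b) - (1/2) * (tt n p s g b * tt n p (m + Suc l) a e)"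
    by (simp only: K1 K2 contr Zzw tt_V[symmetric])
  finally show ?thesis .
qed

lemma BZV:
  assumes b: "b \<in> {1..d}"
  shows "(\<Sum>u<n. \<Sum>v<n. \<Sum>y\<in>{1..d}. \<Sum>l'<n. pd (tf n k g e) p (Zc u v) * pd (tf n l a b) p (Vc y l') * qpb n p (Zc u v) (Vc y l'))
    = (1/2) * (\<Sum>m<k. tt n p (m + l) a e * tt n p (1 + (k - 1 - m)) g b - tt n p (k - 1 - m) g b * tt n p (m + Suc l) a e)"
proof -
  have "(\<Sum>u<n. \<Sum>v<n. \<Sum>y\<in>{1..d}. \<Sum>l'<n. pd (tf n k g e) p (Zc u v) * pd (tf n l a b) p (Vc y l') * qpb n p (Zc u v) (Vc y l'))
    = (\<Sum>u<n. \<Sum>v<n. \<Sum>l'<n. pd (tf n k g e) p (Zc u v) * pd (tf n l a b) p (Vc b l') * qpb n p (Zc u v) (Vc b l'))"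
    by (rule sum.cong[OF refl], rule sum.cong[OF refl], rule sum_single[OF b]) (auto simp: gV kd_def)
  also have "\<dots> = (\<Sum>u<n. \<Sum>v<n. \<Sum>l'<n. (\<Sum>m<k. vz n p e m u * zw n p g (k - 1 - m) v) * (zw n p a l l' * qpb n p (Zc u v) (Vc b l')))"
    by (simp add: gZ gV kd_def mult.assoc)
  also have "\<dots> = (\<Sum>m<k. \<Sum>u<n. \<Sum>v<n. \<Sum>l'<n. vz n p e m u * zw n p g (k - 1 - m) v * (zw n p a l l' * qpb n p (Zc u v) (Vc b l')))"
    by (rule pull3)
  also have "\<dots> = (\<Sum>m<k. (1/2) * (tt n p (m + l) a e * tt n p (1 + (k - 1 - m)) g b) - (1/2) * (tt n p (k - 1 - m) g b * tt n p (m + Suc l) a e))"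
    by (rule sum.cong[OF refl]) (rule BZV_m)
  also have "\<dots> = (1/2) * (\<Sum>m<k. tt n p (m + l) a e * tt n p (1 + (k - 1 - m)) g b - tt n p (k - 1 - m) g b * tt n p (m + Suc l) a e)"
    by (simp add: sum_distrib_left sum_subtractf right_diff_distrib)
  finally show ?thesis .
qed

lemma K3: "(\<Sum>u<n. \<Sum>v<n. \<Sum>w<n. c * (X u * (C w * B v * kd w v))) = (c::complex) * ((\<Sum>u<n. X u) * (\<Sum>v<n. C v * B v))"
proof -
  have "(\<Sum>u<n. \<Sum>v<n. \<Sum>w<n. c * (X u * (C w * B v * kd w v))) = (\<Sum>u<n. \<Sum>v<n. c * (X u * (C v * B v)))"
    by (auto simp: kds intro!: sum.cong)
  also have "\<dots> = c * ((\<Sum>u<n. X u) * (\<Sum>v<n. C v * B v))" by (rule fact2)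
  finally show ?thesis .
qed

lemma K4: "(\<Sum>u<n. \<Sum>v<n. \<Sum>w<n. c * (X u * (C w * E w v * B v))) = (c::complex) * ((\<Sum>u<n. X u) * (\<Sum>v<n. (\<Sum>w<n. C w * E w v) * B v))"
proof -
  define Y where "Y v = (\<Sum>w<n. C w * E w v) * B v" for v
  have "(\<Sum>u<n. \<Sum>v<n. \<Sum>w<n. c * (X u * (C w * E w v * B v))) = (\<Sum>u<n. \<Sum>v<n. c * (X u * Y v))"
    by (simp add: Y_def sum_distrib_left sum_distrib_right mult.assoc)
  also have "\<dots> = c * ((\<Sum>u<n. X u) * (\<Sum>v<n. Y v))" by (rule fact2)
  finally show ?thesis by (simp add: Y_def)
qed

lemma K5: "(\<Sum>j<n. \<Sum>u<n. \<Sum>w<n. c * ((C u * Z j * kd u j) * Y w)) = (c::complex) * ((\<Sum>u<n. C u * Z u) * (\<Sum>w<n. Y w))"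
proof -
  have "(\<Sum>j<n. \<Sum>u<n. \<Sum>w<n. c * ((C u * Z j * kd u j) * Y w)) = (\<Sum>j<n. \<Sum>w<n. \<Sum>u<n. c * ((C u * Z j * kd u j) * Y w))"
    by (rule sum.cong[OF refl], rule sum.swap)
  also have "\<dots> = (\<Sum>j<n. \<Sum>w<n. c * ((C j * Z j) * Y w))"
    by (auto simp: kds intro!: sum.cong)
  also have "\<dots> = c * ((\<Sum>u<n. C u * Z u) * (\<Sum>w<n. Y w))" by (rule fact2)
  finally show ?thesis .
qed

lemma K6: "(\<Sum>j<n. \<Sum>u<n. \<Sum>w<n. c * ((C u * (E u j * Z j)) * Y w)) = (c::complex) * ((\<Sum>u<n. C u * (\<Sum>j<n. E u j * Z j)) * (\<Sum>w<n. Y w))"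
proof -
  have "(\<Sum>j<n. \<Sum>u<n. \<Sum>w<n. c * ((C u * (E u j * Z j)) * Y w)) = (\<Sum>u<n. \<Sum>j<n. \<Sum>w<n. c * ((C u * (E u j * Z j)) * Y w))"
    by (rule sum.swap)
  also have "\<dots> = (\<Sum>u<n. \<Sum>w<n. c * ((C u * (\<Sum>j<n. E u j * Z j)) * Y w))"
    by (rule sum.cong[OF refl], subst sum.swap) (simp add: sum_distrib_left sum_distrib_right mult.assoc)
  also have "\<dots> = c * ((\<Sum>u<n. C u * (\<Sum>j<n. E u j * Z j)) * (\<Sum>w<n. Y w))" by (rule fact2)
  finally show ?thesis .
qed

lemma K7: "(\<Sum>j<n. \<Sum>u<n. \<Sum>w<n. c * (X u * (Y j * D w * kd j w))) = (c::complex) * ((\<Sum>u<n. X u) * (\<Sum>j<n. Y j * D j))"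
proof -
  have "(\<Sum>j<n. \<Sum>u<n. \<Sum>w<n. c * (X u * (Y j * D w * kd j w))) = (\<Sum>u<n. \<Sum>j<n. \<Sum>w<n. c * (X u * (Y j * D w * kd j w)))"
    by (rule sum.swap)
  also have "\<dots> = (\<Sum>u<n. \<Sum>j<n. c * (X u * (Y j * D j)))"
    by (auto simp: kds intro!: sum.cong)
  also have "\<dots> = c * ((\<Sum>u<n. X u) * (\<Sum>j<n. Y j * D j))" by (rule fact2)
  finally show ?thesis .
qed

lemma K8: "(\<Sum>j<n. \<Sum>u<n. \<Sum>w<n. c * (X u * (Y j * E j w * D w))) = (c::complex) * ((\<Sum>u<n. X u) * (\<Sum>w<n. (\<Sum>j<n. Y j * E j w) * D w))"
proof -
  have "(\<Sum>j<n. \<Sum>u<n. \<Sum>w<n. c * (X u * (Y j * E j w * D w))) = (\<Sum>u<n. \<Sum>j<n. \<Sum>w<n. c * (X u * (Y j * E j w * D w)))"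
    by (rule sum.swap)
  also have "\<dots> = (\<Sum>u<n. \<Sum>w<n. \<Sum>j<n. c * (X u * (Y j * E j w * D w)))"
    by (rule sum.cong[OF refl], rule sum.swap)
  also have "\<dots> = (\<Sum>u<n. \<Sum>w<n. c * (X u * ((\<Sum>j<n. Y j * E j w) * D w)))"
    by (simp add: sum_distrib_left sum_distrib_right mult.assoc)
  also have "\<dots> = c * ((\<Sum>u<n. X u) * (\<Sum>w<n. (\<Sum>j<n. Y j * E j w) * D w))" by (rule fact2)
  finally show ?thesis .
qed

lemma K9: "(\<Sum>u<n. \<Sum>v<n. \<Sum>x<n. \<Sum>w<n. c * ((C x * B v * kd x v) * (A u * (E u w * D w))))
   = (c::complex) * ((\<Sum>v<n. C v * B v) * (\<Sum>u<n. A u * (\<Sum>w<n. E u w * D w)))"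
proof -
  define Q where "Q u = A u * (\<Sum>w<n. E u w * D w)" for u
  have "(\<Sum>u<n. \<Sum>v<n. \<Sum>x<n. \<Sum>w<n. c * ((C x * B v * kd x v) * (A u * (E u w * D w))))
      = (\<Sum>u<n. \<Sum>v<n. \<Sum>x<n. c * ((C x * B v * kd x v) * Q u))"
    by (simp add: Q_def sum_distrib_left)
  also have "\<dots> = (\<Sum>u<n. \<Sum>v<n. c * ((C v * B v) * Q u))"
    by (auto simp: kds intro!: sum.cong)
  also have "\<dots> = (\<Sum>v<n. \<Sum>u<n. c * ((C v * B v) * Q u))" by (rule sum.swap)
  also have "\<dots> = c * ((\<Sum>v<n. C v * B v) * (\<Sum>u<n. Q u))" by (rule fact2)
  finally show ?thesis by (simp add: Q_def)
qed

lemma K10: "(\<Sum>u<n. \<Sum>v<n. \<Sum>x<n. \<Sum>w<n. c * ((A u * D w * kd u w) * (C x * (E x v * B v))))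
   = (c::complex) * ((\<Sum>u<n. A u * D u) * (\<Sum>x<n. C x * (\<Sum>v<n. E x v * B v)))"
proof -
  have "(\<Sum>u<n. \<Sum>v<n. \<Sum>x<n. \<Sum>w<n. c * ((A u * D w * kd u w) * (C x * (E x v * B v))))
      = (\<Sum>u<n. \<Sum>v<n. \<Sum>x<n. c * ((A u * D u) * (C x * (E x v * B v))))"
    by (auto simp: kds intro!: sum.cong)
  also have "\<dots> = (\<Sum>u<n. \<Sum>x<n. \<Sum>v<n. c * ((A u * D u) * (C x * (E x v * B v))))"
    by (rule sum.cong[OF refl], rule sum.swap)
  also have "\<dots> = (\<Sum>u<n. \<Sum>x<n. c * ((A u * D u) * (C x * (\<Sum>v<n. E x v * B v))))"
    by (simp add: sum_distrib_left)
  also have "\<dots> = c * ((\<Sum>u<n. A u * D u) * (\<Sum>x<n. C x * (\<Sum>v<n. E x v * B v)))" by (rule fact2)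
  finally show ?thesis .
qed

lemma BZW_m:
  "(\<Sum>u<n. \<Sum>v<n. \<Sum>w<n. vz n p e m u * zw n p g s v * (vz n p b l w * qpb n p (Zc u v) (Wc a w)))
   = (1/2) * (tt n p (m + 1) a e * tt n p (l + s) g b) - (1/2) * (tt n p m a e * tt n p (Suc l + s) g b)"
proof -
  have "(\<Sum>u<n. \<Sum>v<n. \<Sum>w<n. vz n p e m u * zw n p g s v * (vz n p b l w * qpb n p (Zc u v) (Wc a w)))
     = (\<Sum>u<n. \<Sum>v<n. \<Sum>w<n. (1/2) * ((vz n p e m u * zw n p a 1 u) * (vz n p b l w * zw n p g s v * kd w v)))
     - (\<Sum>u<n. \<Sum>v<n. \<Sum>w<n. (1/2) * ((vz n p e m u * p (Wc a u)) * (vz n p b l w * zz n p w v * zw n p g s v)))"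
    unfolding sum_subtractf[symmetric]
    by (intro sum.cong refl) (simp add: brUW_def UWv_zw zz_def zf_def wf_def algebra_simps)
  also have "\<dots> = (1/2) * (tt n p (m + 1) a e * tt n p (l + s) g b) - (1/2) * (tt n p m a e * tt n p (Suc l + s) g b)"
    by (simp only: K3 K4 contr vzZ tt_W[symmetric])
  finally show ?thesis .
qed

lemma BVZ_r:
  "(\<Sum>j<n. \<Sum>c<n. \<Sum>w<n. vz n p b r c * zw n p a s w * (zw n p g k j * qpb n p (Vc e j) (Zc c w)))
   = (-1/2) * (tt n p (r + k) g b * tt n p (1 + s) a e) + (1/2) * (tt n p (r + Suc k) g b * tt n p s a e)"
proof -
  have "(\<Sum>j<n. \<Sum>c<n. \<Sum>w<n. vz n p b r c * zw n p a s w * (zw n p g k j * qpb n p (Vc e j) (Zc c w)))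
     = (\<Sum>j<n. \<Sum>c<n. \<Sum>w<n. (-1/2) * ((vz n p b r c * zw n p g k j * kd c j) * (vz n p e 1 w * zw n p a s w)))
     + (\<Sum>j<n. \<Sum>c<n. \<Sum>w<n. (1/2) * ((vz n p b r c * (zz n p c j * zw n p g k j)) * (p (Vc e w) * zw n p a s w)))"
    unfolding sum.distrib[symmetric]
    by (intro sum.cong refl) (simp add: brUV_def VUv_vz zz_def zf_def vf_def algebra_simps)
  also have "\<dots> = (-1/2) * (tt n p (r + k) g b * tt n p (1 + s) a e) + (1/2) * (tt n p (r + Suc k) g b * tt n p s a e)"
    by (simp only: K5 K6 contr Zzw tt_V[symmetric])
  finally show ?thesis .
qed

lemma BWZ_r:
  "(\<Sum>j<n. \<Sum>c<n. \<Sum>w<n. vz n p b r c * zw n p a s w * (vz n p e k j * qpb n p (Wc g j) (Zc c w)))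
   = (-1/2) * (tt n p (r + 1) g b * tt n p (k + s) a e) + (1/2) * (tt n p r g b * tt n p (Suc k + s) a e)"
proof -
  have "(\<Sum>j<n. \<Sum>c<n. \<Sum>w<n. vz n p b r c * zw n p a s w * (vz n p e k j * qpb n p (Wc g j) (Zc c w)))
     = (\<Sum>j<n. \<Sum>c<n. \<Sum>w<n. (-1/2) * ((vz n p b r c * zw n p g 1 c) * (vz n p e k j * zw n p a s w * kd j w)))
     + (\<Sum>j<n. \<Sum>c<n. \<Sum>w<n. (1/2) * ((vz n p b r c * p (Wc g c)) * (vz n p e k j * zz n p j w * zw n p a s w)))"
    unfolding sum.distrib[symmetric]
    by (intro sum.cong refl) (simp add: brUW_def UWv_zw zz_def zf_def wf_def algebra_simps)
  also have "\<dots> = (-1/2) * (tt n p (r + 1) g b * tt n p (k + s) a e) + (1/2) * (tt n p r g b * tt n p (Suc k + s) a e)"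
    by (simp only: K7 K8 contr vzZ tt_W[symmetric])
  finally show ?thesis .
qed

lemma BZZ_mr:
  "(\<Sum>u<n. \<Sum>v<n. \<Sum>x<n. \<Sum>w<n. vz n p e m u * zw n p g s v * (vz n p b r x * zw n p a s' w) * qpb n p (Zc u v) (Zc x w))
   = (1/2) * (tt n p (r + s) g b * tt n p (m + (2 + s')) a e) - (1/2) * (tt n p (m + s') a e * tt n p (r + (2 + s)) g b)"
proof -
  have "(\<Sum>u<n. \<Sum>v<n. \<Sum>x<n. \<Sum>w<n. vz n p e m u * zw n p g s v * (vz n p b r x * zw n p a s' w) * qpb n p (Zc u v) (Zc x w))
     = (\<Sum>u<n. \<Sum>v<n. \<Sum>x<n. \<Sum>w<n. (1/2) * ((vz n p b r x * zw n p g s v * kd x v) * (vz n p e m u * (zp n p 2 u w * zw n p a s' w))))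
     - (\<Sum>u<n. \<Sum>v<n. \<Sum>x<n. \<Sum>w<n. (1/2) * ((vz n p e m u * zw n p a s' w * kd u w) * (vz n p b r x * (zp n p 2 x v * zw n p g s v))))"
    unfolding sum_subtractf[symmetric]
    by (intro sum.cong refl) (simp add: mm_zp2 algebra_simps)
  also have "\<dots> = (1/2) * (tt n p (r + s) g b * tt n p (m + (2 + s')) a e) - (1/2) * (tt n p (m + s') a e * tt n p (r + (2 + s)) g b)"
    by (simp only: K9 K10 contr zw_add[symmetric])
  finally show ?thesis .
qed

lemma lin: "(\<Sum>r\<in>R. (-1/2) * X r + (1/2) * Y r) = (-1/2) * (\<Sum>r\<in>R. X r - (Y r::complex))"
  by (simp add: sum_distrib_left sum_subtractf sum.distrib algebra_simps)

lemma move2: "(\<Sum>v\<in>V. \<Sum>w\<in>W. \<Sum>m\<in>M. G m v w) = (\<Sum>m\<in>M. \<Sum>v\<in>V. \<Sum>w\<in>W. G m v w)"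
proof -
  have "(\<Sum>v\<in>V. \<Sum>w\<in>W. \<Sum>m\<in>M. G m v w) = (\<Sum>v\<in>V. \<Sum>m\<in>M. \<Sum>w\<in>W. G m v w)"
    by (rule sum.cong[OF refl], rule sum.swap)
  also have "\<dots> = (\<Sum>m\<in>M. \<Sum>v\<in>V. \<Sum>w\<in>W. G m v w)" by (rule sum.swap)
  finally show ?thesis .
qed

lemma move3: "(\<Sum>u\<in>U. \<Sum>v\<in>V. \<Sum>w\<in>W. \<Sum>m\<in>M. G m u v w) = (\<Sum>m\<in>M. \<Sum>u\<in>U. \<Sum>v\<in>V. \<Sum>w\<in>W. G m u v w)"
proof -
  have "(\<Sum>u\<in>U. \<Sum>v\<in>V. \<Sum>w\<in>W. \<Sum>m\<in>M. G m u v w) = (\<Sum>u\<in>U. \<Sum>m\<in>M. \<Sum>v\<in>V. \<Sum>w\<in>W. G m u v w)"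
    by (rule sum.cong[OF refl], rule move2)
  also have "\<dots> = (\<Sum>m\<in>M. \<Sum>u\<in>U. \<Sum>v\<in>V. \<Sum>w\<in>W. G m u v w)" by (rule sum.swap)
  finally show ?thesis .
qed

lemma move4: "(\<Sum>t\<in>T. \<Sum>u\<in>U. \<Sum>v\<in>V. \<Sum>w\<in>W. \<Sum>m\<in>M. G m t u v w) = (\<Sum>m\<in>M. \<Sum>t\<in>T. \<Sum>u\<in>U. \<Sum>v\<in>V. \<Sum>w\<in>W. G m t u v w)"
proof -
  have "(\<Sum>t\<in>T. \<Sum>u\<in>U. \<Sum>v\<in>V. \<Sum>w\<in>W. \<Sum>m\<in>M. G m t u v w) = (\<Sum>t\<in>T. \<Sum>m\<in>M. \<Sum>u\<in>U. \<Sum>v\<in>V. \<Sum>w\<in>W. G m t u v w)"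
    by (rule sum.cong[OF refl], rule move3)
  also have "\<dots> = (\<Sum>m\<in>M. \<Sum>t\<in>T. \<Sum>u\<in>U. \<Sum>v\<in>V. \<Sum>w\<in>W. G m t u v w)" by (rule sum.swap)
  finally show ?thesis .
qed

lemma BZW:
  assumes a: "a \<in> {1..d}"
  shows "(\<Sum>u<n. \<Sum>v<n. \<Sum>y\<in>{1..d}. \<Sum>l'<n. pd (tf n k g e) p (Zc u v) * pd (tf n l a b) p (Wc y l') * qpb n p (Zc u v) (Wc y l'))
    = (1/2) * (\<Sum>m<k. tt n p (m + 1) a e * tt n p (l + (k - 1 - m)) g b - tt n p m a e * tt n p (Suc l + (k - 1 - m)) g b)"
proof -
  have "(\<Sum>u<n. \<Sum>v<n. \<Sum>y\<in>{1..d}. \<Sum>l'<n. pd (tf n k g e) p (Zc u v) * pd (tf n l a b) p (Wc y l') * qpb n p (Zc u v) (Wc y l'))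
    = (\<Sum>u<n. \<Sum>v<n. \<Sum>l'<n. pd (tf n k g e) p (Zc u v) * pd (tf n l a b) p (Wc a l') * qpb n p (Zc u v) (Wc a l'))"
    by (rule sum.cong[OF refl], rule sum.cong[OF refl], rule sum_single[OF a]) (auto simp: gW kd_def)
  also have "\<dots> = (\<Sum>u<n. \<Sum>v<n. \<Sum>l'<n. \<Sum>m<k. vz n p e m u * zw n p g (k - 1 - m) v * (vz n p b l l' * qpb n p (Zc u v) (Wc a l')))"
    by (simp add: gZ gW kd_def sum_distrib_right mult.assoc)
  also have "\<dots> = (\<Sum>m<k. \<Sum>u<n. \<Sum>v<n. \<Sum>l'<n. vz n p e m u * zw n p g (k - 1 - m) v * (vz n p b l l' * qpb n p (Zc u v) (Wc a l')))"
    by (rule move3)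
  also have "\<dots> = (\<Sum>m<k. (1/2) * (tt n p (m + 1) a e * tt n p (l + (k - 1 - m)) g b) - (1/2) * (tt n p m a e * tt n p (Suc l + (k - 1 - m)) g b))"
    by (rule sum.cong[OF refl]) (rule BZW_m)
  also have "\<dots> = (1/2) * (\<Sum>m<k. tt n p (m + 1) a e * tt n p (l + (k - 1 - m)) g b - tt n p m a e * tt n p (Suc l + (k - 1 - m)) g b)"
    by (simp add: sum_distrib_left sum_subtractf right_diff_distrib)
  finally show ?thesis .
qed

lemma BVZ:
  assumes e: "e \<in> {1..d}"
  shows "(\<Sum>x\<in>{1..d}. \<Sum>j<n. \<Sum>c<n. \<Sum>w<n. pd (tf n k g e) p (Vc x j) * pd (tf n l a b) p (Zc c w) * qpb n p (Vc x j) (Zc c w))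
    = (-1/2) * (\<Sum>r<l. tt n p (r + k) g b * tt n p (1 + (l - 1 - r)) a e - tt n p (r + Suc k) g b * tt n p (l - 1 - r) a e)"
proof -
  have "(\<Sum>x\<in>{1..d}. \<Sum>j<n. \<Sum>c<n. \<Sum>w<n. pd (tf n k g e) p (Vc x j) * pd (tf n l a b) p (Zc c w) * qpb n p (Vc x j) (Zc c w))
    = (\<Sum>j<n. \<Sum>c<n. \<Sum>w<n. pd (tf n k g e) p (Vc e j) * pd (tf n l a b) p (Zc c w) * qpb n p (Vc e j) (Zc c w))"
    by (rule sum_single[OF e]) (auto simp: gV kd_def)
  also have "\<dots> = (\<Sum>j<n. \<Sum>c<n. \<Sum>w<n. \<Sum>r<l. vz n p b r c * zw n p a (l - 1 - r) w * (zw n p g k j * qpb n p (Vc e j) (Zc c w)))"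
    by (simp add: gZ gV kd_def sum_distrib_right sum_distrib_left mult_ac)
  also have "\<dots> = (\<Sum>r<l. \<Sum>j<n. \<Sum>c<n. \<Sum>w<n. vz n p b r c * zw n p a (l - 1 - r) w * (zw n p g k j * qpb n p (Vc e j) (Zc c w)))"
    by (rule move3)
  also have "\<dots> = (\<Sum>r<l. (-1/2) * (tt n p (r + k) g b * tt n p (1 + (l - 1 - r)) a e) + (1/2) * (tt n p (r + Suc k) g b * tt n p (l - 1 - r) a e))"
    by (rule sum.cong[OF refl]) (rule BVZ_r)
  also have "\<dots> = (-1/2) * (\<Sum>r<l. tt n p (r + k) g b * tt n p (1 + (l - 1 - r)) a e - tt n p (r + Suc k) g b * tt n p (l - 1 - r) a e)"
    by (rule lin)
  finally show ?thesis .
qed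

lemma BWZ:
  assumes g: "g \<in> {1..d}"
  shows "(\<Sum>x\<in>{1..d}. \<Sum>j<n. \<Sum>c<n. \<Sum>w<n. pd (tf n k g e) p (Wc x j) * pd (tf n l a b) p (Zc c w) * qpb n p (Wc x j) (Zc c w))
    = (-1/2) * (\<Sum>r<l. tt n p (r + 1) g b * tt n p (k + (l - 1 - r)) a e - tt n p r g b * tt n p (Suc k + (l - 1 - r)) a e)"
proof -
  have "(\<Sum>x\<in>{1..d}. \<Sum>j<n. \<Sum>c<n. \<Sum>w<n. pd (tf n k g e) p (Wc x j) * pd (tf n l a b) p (Zc c w) * qpb n p (Wc x j) (Zc c w))
    = (\<Sum>j<n. \<Sum>c<n. \<Sum>w<n. pd (tf n k g e) p (Wc g j) * pd (tf n l a b) p (Zc c w) * qpb n p (Wc g j) (Zc c w))"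
    by (rule sum_single[OF g]) (auto simp: gW kd_def)
  also have "\<dots> = (\<Sum>j<n. \<Sum>c<n. \<Sum>w<n. \<Sum>r<l. vz n p b r c * zw n p a (l - 1 - r) w * (vz n p e k j * qpb n p (Wc g j) (Zc c w)))"
    by (simp add: gZ gW kd_def sum_distrib_right sum_distrib_left mult_ac)
  also have "\<dots> = (\<Sum>r<l. \<Sum>j<n. \<Sum>c<n. \<Sum>w<n. vz n p b r c * zw n p a (l - 1 - r) w * (vz n p e k j * qpb n p (Wc g j) (Zc c w)))"
    by (rule move3)
  also have "\<dots> = (\<Sum>r<l. (-1/2) * (tt n p (r + 1) g b * tt n p (k + (l - 1 - r)) a e) + (1/2) * (tt n p r g b * tt n p (Suc k + (l - 1 - r)) a e))"
    by (rule sum.cong[OF refl]) (rule BWZ_r)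
  also have "\<dots> = (-1/2) * (\<Sum>r<l. tt n p (r + 1) g b * tt n p (k + (l - 1 - r)) a e - tt n p r g b * tt n p (Suc k + (l - 1 - r)) a e)"
    by (rule lin)
  finally show ?thesis .
qed

lemma BZZ:
  "(\<Sum>u<n. \<Sum>v<n. \<Sum>x<n. \<Sum>w<n. pd (tf n k g e) p (Zc u v) * pd (tf n l a b) p (Zc x w) * qpb n p (Zc u v) (Zc x w))
    = (1/2) * (\<Sum>m<k. \<Sum>r<l. tt n p (r + (k - 1 - m)) g b * tt n p (m + (2 + (l - 1 - r))) a e - tt n p (m + (l - 1 - r)) a e * tt n p (r + (2 + (k - 1 - m))) g b)"
proof -
  have "(\<Sum>u<n. \<Sum>v<n. \<Sum>x<n. \<Sum>w<n. pd (tf n k g e) p (Zc u v) * pd (tf n l a b) p (Zc x w) * qpb n p (Zc u v) (Zc x w))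
    = (\<Sum>u<n. \<Sum>v<n. \<Sum>x<n. \<Sum>w<n. \<Sum>m<k. \<Sum>r<l. vz n p e m u * zw n p g (k - 1 - m) v * (vz n p b r x * zw n p a (l - 1 - r) w) * qpb n p (Zc u v) (Zc x w))"
    by (simp only: gZ sum_distrib_right sum_distrib_left) ((rule sum.cong[OF refl])+, rule sum.swap)
  also have "\<dots> = (\<Sum>m<k. \<Sum>u<n. \<Sum>v<n. \<Sum>x<n. \<Sum>w<n. \<Sum>r<l. vz n p e m u * zw n p g (k - 1 - m) v * (vz n p b r x * zw n p a (l - 1 - r) w) * qpb n p (Zc u v) (Zc x w))"
    by (rule move4)
  also have "\<dots> = (\<Sum>m<k. \<Sum>r<l. \<Sum>u<n. \<Sum>v<n. \<Sum>x<n. \<Sum>w<n. vz n p e m u * zw n p g (k - 1 - m) v * (vz n p b r x * zw n p a (l - 1 - r) w) * qpb n p (Zc u v) (Zc x w))"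
    by (rule sum.cong[OF refl], rule move4)
  also have "\<dots> = (\<Sum>m<k. \<Sum>r<l. (1/2) * (tt n p (r + (k - 1 - m)) g b * tt n p (m + (2 + (l - 1 - r))) a e) - (1/2) * (tt n p (m + (l - 1 - r)) a e * tt n p (r + (2 + (k - 1 - m))) g b))"
    by (intro sum.cong refl) (rule BZZ_mr)
  also have "\<dots> = (1/2) * (\<Sum>m<k. \<Sum>r<l. tt n p (r + (k - 1 - m)) g b * tt n p (m + (2 + (l - 1 - r))) a e - tt n p (m + (l - 1 - r)) a e * tt n p (r + (2 + (k - 1 - m))) g b)"
    by (simp add: sum_distrib_left sum_subtractf right_diff_distrib)
  finally show ?thesis .
qed

lemma sg_anti: "ord_sign x y = - ord_sign y x"
  by (simp add: ord_sign_def)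

lemma part2:
  assumes A: "\<alpha> \<in> {1..d}" and B: "\<beta> \<in> {1..d}" and G: "\<gamma> \<in> {1..d}" and E: "\<epsilon> \<in> {1..d}"
  shows "(let t = (\<lambda>m a b. tf n m a b p); h = (1/2 :: complex); sg = ord_sign in
             pbr n d (tf n k \<gamma> \<epsilon>) (tf n l \<alpha> \<beta>) p =
               h * (sg \<gamma> \<beta> + sg \<epsilon> \<alpha> - sg \<epsilon> \<beta> - sg \<gamma> \<alpha>) * t k \<gamma> \<epsilon> * t l \<alpha> \<beta>
             + h * sg \<gamma> \<beta> * t (k+l) \<alpha> \<epsilon> * t 0 \<gamma> \<beta>
             + h * sg \<epsilon> \<alpha> * t 0 \<alpha> \<epsilon> * t (k+l) \<gamma> \<beta>
             - h * sg \<epsilon> \<beta> * t l \<alpha> \<epsilon> * t k \<gamma> \<beta>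
             - h * sg \<gamma> \<alpha> * t k \<alpha> \<epsilon> * t l \<gamma> \<beta>
             - kd \<gamma> \<beta> * (t (k+l) \<alpha> \<epsilon> + h * t (k+l) \<alpha> \<epsilon> * t 0 \<gamma> \<beta> + h * t k \<gamma> \<epsilon> * t l \<alpha> \<beta>)
             + kd \<alpha> \<epsilon> * (t (k+l) \<gamma> \<beta> + h * t 0 \<alpha> \<epsilon> * t (k+l) \<gamma> \<beta> + h * t k \<gamma> \<epsilon> * t l \<alpha> \<beta>)
             + (if k \<ge> 1 \<and> l \<ge> 1 then
                  h * ((\<Sum>\<tau>=1..k. t (k-\<tau>) \<gamma> \<beta> * t (l+\<tau>) \<alpha> \<epsilon>)
                       - (\<Sum>\<tau>=1..k-1. t (k+l-\<tau>) \<gamma> \<beta> * t \<tau> \<alpha> \<epsilon>))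
                - h * ((\<Sum>\<sigma>=1..l. t (k+\<sigma>) \<gamma> \<beta> * t (l-\<sigma>) \<alpha> \<epsilon>)
                       - (\<Sum>\<sigma>=1..l-1. t \<sigma> \<gamma> \<beta> * t (k+l-\<sigma>) \<alpha> \<epsilon>))
                else 0))"
proof -
  let ?T = "\<lambda>x. tt n p x \<gamma> \<beta>" and ?U = "\<lambda>x. tt n p x \<alpha> \<epsilon>"
  let ?F = "pd (tf n k \<gamma> \<epsilon>) p" and ?G = "pd (tf n l \<alpha> \<beta>) p"
  define ZZ where "ZZ = (\<Sum>m<k. \<Sum>r<l. ?T (r + (k - 1 - m)) * ?U (m + (2 + (l - 1 - r))) - ?U (m + (l - 1 - r)) * ?T (r + (2 + (k - 1 - m))))"
  define S1 where "S1 = (\<Sum>m<k. ?U (m+l) * ?T (1+(k-1-m)) - ?T (k-1-m) * ?U (m + Suc l))"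
  define S2 where "S2 = (\<Sum>m<k. ?U (m+1) * ?T (l+(k-1-m)) - ?U m * ?T (Suc l + (k-1-m)))"
  define S3 where "S3 = (\<Sum>r<l. ?T (r+k) * ?U (1+(l-1-r)) - ?T (r + Suc k) * ?U (l-1-r))"
  define S4 where "S4 = (\<Sum>r<l. ?T (r+1) * ?U (k+(l-1-r)) - ?T r * ?U (Suc k + (l-1-r)))"
  have tel: "S1 + S2 - S3 - S4 = 0"
    unfolding S1_def S2_def S3_def S4_def by (rule TEL)
  have main: "pbr n d (tf n k \<gamma> \<epsilon>) (tf n l \<alpha> \<beta>) p =
      ((1/2) * ZZ + (1/2) * S1 + (1/2) * S2)
    + ((-1/2) * S3 + (1/2) * ord_sign \<beta> \<epsilon> * (tt n p k \<gamma> \<beta> * tt n p l \<alpha> \<epsilon> + tt n p k \<gamma> \<epsilon> * tt n p l \<alpha> \<beta>)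
       + (kd \<epsilon> \<alpha> * (tt n p (l + k) \<gamma> \<beta> + (1/2) * (tt n p k \<gamma> \<epsilon> * tt n p l \<epsilon> \<beta>) + (1/2) * (tt n p (l + k) \<gamma> \<beta> * tt n p 0 \<epsilon> \<epsilon>))
          + (1/2) * ord_sign \<epsilon> \<alpha> * (tt n p (l + k) \<gamma> \<beta> * tt n p 0 \<alpha> \<epsilon> + tt n p k \<gamma> \<epsilon> * tt n p l \<alpha> \<beta>)))
    + ((-1/2) * S4 + - (kd \<beta> \<gamma> * (tt n p (k + l) \<alpha> \<epsilon> + (1/2) * (tt n p k \<beta> \<epsilon> * tt n p l \<alpha> \<beta>) + (1/2) * (tt n p (k + l) \<alpha> \<epsilon> * tt n p 0 \<beta> \<beta>))
      + (1/2) * ord_sign \<beta> \<gamma> * (tt n p (k + l) \<alpha> \<epsilon> * tt n p 0 \<gamma> \<beta> + tt n p k \<gamma> \<epsilon> * tt n p l \<alpha> \<beta>))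
       + (1/2) * ord_sign \<alpha> \<gamma> * (tt n p k \<gamma> \<epsilon> * tt n p l \<alpha> \<beta> + tt n p k \<alpha> \<epsilon> * tt n p l \<gamma> \<beta>))"
    unfolding pbr_blocks[OF gX gX] inner_def sum.distrib
    unfolding BZZ BZV[OF B] BZW[OF A] BVZ[OF E] BVV[OF E B] BVW[OF E A] BWZ[OF G] BWV[OF G B] BWW[OF G A]
    unfolding ZZ_def S1_def S2_def S3_def S4_def by (rule refl)
  have zz: "(1/2) * ZZ = (if 1 \<le> k \<and> 1 \<le> l then
      (1/2) * ((\<Sum>\<tau>=1..k. ?T (k-\<tau>) * ?U (l+\<tau>)) - (\<Sum>\<tau>=1..k-1. ?T (k+l-\<tau>) * ?U \<tau>))
    - (1/2) * ((\<Sum>\<sigma>=1..l. ?T (k+\<sigma>) * ?U (l-\<sigma>)) - (\<Sum>\<sigma>=1..l-1. ?T \<sigma> * ?U (k+l-\<sigma>))) else 0)"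
  proof (cases "1 \<le> k \<and> 1 \<le> l")
    case True
    then have "ZZ = ((\<Sum>\<tau>=1..k. ?T (k-\<tau>) * ?U (l+\<tau>)) - (\<Sum>\<tau>=1..k-1. ?T (k+l-\<tau>) * ?U \<tau>))
    - ((\<Sum>\<sigma>=1..l. ?T (k+\<sigma>) * ?U (l-\<sigma>)) - (\<Sum>\<sigma>=1..l-1. ?T \<sigma> * ?U (k+l-\<sigma>)))"
      unfolding ZZ_def by (intro ZZcomb) auto
    then show ?thesis using True by (simp add: right_diff_distrib)
  next
    case False
    then have "k = 0 \<or> l = 0" by auto
    then have "ZZ = 0" unfolding ZZ_def by auto
    then show ?thesis by (simp only: if_not_P[OF False] mult_zero_right)
  qed
  have s1: "S1 = S3 + S4 - S2"
  proof -
    have "S1 = (S1 + S2 - S3 - S4) + (S3 + S4 - S2)" by (simp add: algebra_simps)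
    then show ?thesis using tel by simp
  qed
  show ?thesis
    unfolding Let_def tf_tt main zz s1 sg_anti[of \<beta> \<epsilon>] sg_anti[of \<alpha> \<gamma>] sg_anti[of \<beta> \<gamma>] add.commute[of l k]
    by (cases "\<epsilon> = \<alpha>"; cases "\<beta> = \<gamma>") (simp_all add: kd_def algebra_simps diff_divide_distrib add_divide_distrib)

qed


theorem mainTheorem8:
  fixes n d :: nat and q :: complex
  assumes "n \<ge> 1" and "d \<ge> 1" and "q \<noteq> 0" and "\<forall>m::nat. m > 0 \<longrightarrow> q ^ m \<noteq> 1"
  shows "(\<forall>p\<in>Mx n d q. \<forall>i k \<alpha> \<beta>. i \<ge> 1 \<longrightarrow> \<alpha> \<in> {1..d} \<longrightarrow> \<beta> \<in> {1..d} \<longrightarrow>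
            pbr n d (trZ n i) (tf n k \<beta> \<alpha>) p = 0)
       \<and> (\<forall>p\<in>Mx n d q. \<forall>\<alpha>\<in>{1..d}. \<forall>\<beta>\<in>{1..d}. \<forall>\<gamma>\<in>{1..d}. \<forall>\<epsilon>\<in>{1..d}. \<forall>k l.
            (let t = (\<lambda>m a b. tf n m a b p); h = (1/2 :: complex); sg = ord_sign in
             pbr n d (tf n k \<gamma> \<epsilon>) (tf n l \<alpha> \<beta>) p =
               h * (sg \<gamma> \<beta> + sg \<epsilon> \<alpha> - sg \<epsilon> \<beta> - sg \<gamma> \<alpha>) * t k \<gamma> \<epsilon> * t l \<alpha> \<beta>
             + h * sg \<gamma> \<beta> * t (k+l) \<alpha> \<epsilon> * t 0 \<gamma> \<beta>
             + h * sg \<epsilon> \<alpha> * t 0 \<alpha> \<epsilon> * t (k+l) \<gamma> \<beta>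
             - h * sg \<epsilon> \<beta> * t l \<alpha> \<epsilon> * t k \<gamma> \<beta>
             - h * sg \<gamma> \<alpha> * t k \<alpha> \<epsilon> * t l \<gamma> \<beta>
             - kd \<gamma> \<beta> * (t (k+l) \<alpha> \<epsilon> + h * t (k+l) \<alpha> \<epsilon> * t 0 \<gamma> \<beta> + h * t k \<gamma> \<epsilon> * t l \<alpha> \<beta>)
             + kd \<alpha> \<epsilon> * (t (k+l) \<gamma> \<beta> + h * t 0 \<alpha> \<epsilon> * t (k+l) \<gamma> \<beta> + h * t k \<gamma> \<epsilon> * t l \<alpha> \<beta>)
             + (if k \<ge> 1 \<and> l \<ge> 1 then
                  h * ((\<Sum>\<tau>=1..k. t (k-\<tau>) \<gamma> \<beta> * t (l+\<tau>) \<alpha> \<epsilon>)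
                       - (\<Sum>\<tau>=1..k-1. t (k+l-\<tau>) \<gamma> \<beta> * t \<tau> \<alpha> \<epsilon>))
                - h * ((\<Sum>\<sigma>=1..l. t (k+\<sigma>) \<gamma> \<beta> * t (l-\<sigma>) \<alpha> \<epsilon>)
                       - (\<Sum>\<sigma>=1..l-1. t \<sigma> \<gamma> \<beta> * t (k+l-\<sigma>) \<alpha> \<epsilon>))
                else 0)))"
  proof (intro conjI)
  show "\<forall>p\<in>Mx n d q. \<forall>i k \<alpha> \<beta>. i \<ge> 1 \<longrightarrow> \<alpha> \<in> {1..d} \<longrightarrow> \<beta> \<in> {1..d} \<longrightarrow>
            pbr n d (trZ n i) (tf n k \<beta> \<alpha>) p = 0"
    by (intro ballI allI impI, rule part1)
  show "\<forall>p\<in>Mx n d q. \<forall>\<alpha>\<in>{1..d}. \<forall>\<beta>\<in>{1..d}. \<forall>\<gamma>\<in>{1..d}. \<forall>\<epsilon>\<in>{1..d}. \<forall>k l.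
            (let t = (\<lambda>m a b. tf n m a b p); h = (1/2 :: complex); sg = ord_sign in
             pbr n d (tf n k \<gamma> \<epsilon>) (tf n l \<alpha> \<beta>) p =
               h * (sg \<gamma> \<beta> + sg \<epsilon> \<alpha> - sg \<epsilon> \<beta> - sg \<gamma> \<alpha>) * t k \<gamma> \<epsilon> * t l \<alpha> \<beta>
             + h * sg \<gamma> \<beta> * t (k+l) \<alpha> \<epsilon> * t 0 \<gamma> \<beta>
             + h * sg \<epsilon> \<alpha> * t 0 \<alpha> \<epsilon> * t (k+l) \<gamma> \<beta>
             - h * sg \<epsilon> \<beta> * t l \<alpha> \<epsilon> * t k \<gamma> \<beta>
             - h * sg \<gamma> \<alpha> * t k \<alpha> \<epsilon> * t l \<gamma> \<beta>
             - kd \<gamma> \<beta> * (t (k+l) \<alpha> \<epsilon> + h * t (k+l) \<alpha> \<epsilon> * t 0 \<gamma> \<beta> + h * t k \<gamma> \<epsilon> * t l \<alpha> \<beta>)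
             + kd \<alpha> \<epsilon> * (t (k+l) \<gamma> \<beta> + h * t 0 \<alpha> \<epsilon> * t (k+l) \<gamma> \<beta> + h * t k \<gamma> \<epsilon> * t l \<alpha> \<beta>)
             + (if k \<ge> 1 \<and> l \<ge> 1 then
                  h * ((\<Sum>\<tau>=1..k. t (k-\<tau>) \<gamma> \<beta> * t (l+\<tau>) \<alpha> \<epsilon>)
                       - (\<Sum>\<tau>=1..k-1. t (k+l-\<tau>) \<gamma> \<beta> * t \<tau> \<alpha> \<epsilon>))
                - h * ((\<Sum>\<sigma>=1..l. t (k+\<sigma>) \<gamma> \<beta> * t (l-\<sigma>) \<alpha> \<epsilon>)
                       - (\<Sum>\<sigma>=1..l-1. t \<sigma> \<gamma> \<beta> * t (k+l-\<sigma>) \<alpha> \<epsilon>))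
                else 0))"
    by (intro ballI allI, rule part2) assumption+
qed

end
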